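(* Let $1\le p<\infty$ and let $\rho=\{\rho_x\}_{x\in\mathbb{R}^n}$ be a family of norms on $\mathbb{C}^d$ such that for every $x\in\mathbb{R}^n$ there is a positive-definite self-adjoint matrix $W_x$ with $\rho_x(\mathbf{v})\le|W_x\mathbf{v}|\le d^{1/2}\rho_x(\mathbf{v})$ for all $\mathbf{v}\in\mathbb{C}^d$, where $x\mapsto W_x$ is an invertible matrix weight and $\|W_x\|_{op}^p\in L^1_{\rm loc}(\mathbb{R}^n)$. A subset $\mathcal{F}\subset L^p(\rho)$ is totally bounded if: (a) $\sup_{\mathbf{f}\in\mathcal{F}}\|\mathbf{f}\|_{L^p(\rho)}<\infty$; (b) $\lim_{R\to\infty}\sup_{\mathbf{f}\in\mathcal{F}}\|\mathbf{f}\chi_{B^c(0,R)}\|_{L^p(\rho)}=0$; (c) $\lim_{r\to0}\sup_{\mathbf{f}\in\mathcal{F}}\sup_{y\in B(0,r)}\|\tau_y\mathbf{f}-\mathbf{f}\|_{L^p(\rho)}=0$, where $\tau_y\mathbf{f}(x)=\mathbf{f}(x-y)$.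
   Context: Lebesgue measure on $\mathbb{R}^n$. It is assumed that $x\mapsto\rho_x(\mathbf{f}(x))$ is measurable for every measurable $\mathbf{f}:\mathbb{R}^n\to\mathbb{C}^d$. $L^p(\rho)$ consists of measurable $\mathbf{f}:\mathbb{R}^n\to\mathbb{C}^d$ with $\|\mathbf{f}\|_{L^p(\rho)}^p:=\int_{\mathbb{R}^n}[\rho_x(\mathbf{f}(x))]^pdx<\infty$. A matrix weight is a measurable map $W:\mathbb{R}^n\to\mathcal{S}_d$ (self-adjoint non-negative-definite complex $d\times d$ matrices) with $\|W\|_{op}\in L^1_{\rm loc}(\mathbb{R}^n)$; invertible means $\det W(x)\neq0$ a.e. *)

theory Defs
  imports "HOL-Analysis.Analysis"
begin

definition is_cnorm :: "(complex^'d \<Rightarrow> real) \<Rightarrow> bool" where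
  "is_cnorm N \<longleftrightarrow>
     (\<forall>v. N v = 0 \<longleftrightarrow> v = 0) \<and>
     (\<forall>c v. N (c *s v) = cmod c * N v) \<and>
     (\<forall>u v. N (u + v) \<le> N u + N v)"

definition conj_transpose :: "complex^'n^'m \<Rightarrow> complex^'m^'n" where
  "conj_transpose A = (\<chi> i j. cnj (A $ j $ i))"

definition self_adjoint :: "complex^'n^'n \<Rightarrow> bool" where
  "self_adjoint A \<longleftrightarrow> conj_transpose A = A"

definition cinner :: "complex^'n \<Rightarrow> complex^'n \<Rightarrow> complex" where
  "cinner u v = (\<Sum>i\<in>UNIV. cnj (u $ i) * v $ i)"

definition pos_def_sa :: "complex^'n^'n \<Rightarrow> bool" where
  "pos_def_sa A \<longleftrightarrow> self_adjoint A \<and> (\<forall>v. v \<noteq> 0 \<longrightarrow> 0 < Re (cinner v (A *v v)))"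

definition op_norm :: "complex^'n^'m \<Rightarrow> real" where
  "op_norm A = onorm (\<lambda>v. A *v v)"

definition loc_integrable :: "('a::euclidean_space \<Rightarrow> real) \<Rightarrow> bool" where
  "loc_integrable g \<longleftrightarrow> (\<forall>K. compact K \<longrightarrow> set_integrable lebesgue K g)"

definition matrix_weight :: "('a::euclidean_space \<Rightarrow> complex^'d^'d) \<Rightarrow> bool" where
  "matrix_weight W \<longleftrightarrow>
     (\<forall>i j. (\<lambda>x. W x $ i $ j) \<in> borel_measurable lebesgue) \<and>
     (\<forall>x. self_adjoint (W x) \<and> (\<forall>v. 0 \<le> Re (cinner v (W x *v v)))) \<and>
     loc_integrable (\<lambda>x. op_norm (W x))"

definition invertible_matrix_weight :: "('a::euclidean_space \<Rightarrow> complex^'d^'d) \<Rightarrow> bool" where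
  "invertible_matrix_weight W \<longleftrightarrow> matrix_weight W \<and> (AE x in lebesgue. det (W x) \<noteq> 0)"

definition Lp_rho :: "real \<Rightarrow> ('a::euclidean_space \<Rightarrow> complex^'d \<Rightarrow> real) \<Rightarrow> ('a \<Rightarrow> complex^'d) set" where
  "Lp_rho p \<rho> = {f. f \<in> borel_measurable lebesgue \<and>
      (\<integral>\<^sup>+ x. ennreal (\<rho> x (f x) powr p) \<partial>lebesgue) < \<infinity>}"

definition Lp_rho_norm :: "real \<Rightarrow> ('a::euclidean_space \<Rightarrow> complex^'d \<Rightarrow> real) \<Rightarrow> ('a \<Rightarrow> complex^'d) \<Rightarrow> ennreal" where
  "Lp_rho_norm p \<rho> f =
     (let I = (\<integral>\<^sup>+ x. ennreal (\<rho> x (f x) powr p) \<partial>lebesgue)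
      in if I = \<infinity> then \<infinity> else ennreal (enn2real I powr (1 / p)))"

definition transl :: "'a::ab_group_add \<Rightarrow> ('a \<Rightarrow> 'b) \<Rightarrow> 'a \<Rightarrow> 'b" where
  "transl y f = (\<lambda>x. f (x - y))"

definition totally_bounded_Lp_rho :: "real \<Rightarrow> ('a::euclidean_space \<Rightarrow> complex^'d \<Rightarrow> real) \<Rightarrow> ('a \<Rightarrow> complex^'d) set \<Rightarrow> bool" where
  "totally_bounded_Lp_rho p \<rho> F \<longleftrightarrow>
     (\<forall>e>0. \<exists>K. finite K \<and> K \<subseteq> Lp_rho p \<rho> \<and>
        (\<forall>f\<in>F. \<exists>g\<in>K. Lp_rho_norm p \<rho> (\<lambda>x. f x - g x) < ennreal e))"

end

theory Submission
  imports Defs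
begin

lemma meas_vec_nth[measurable (raw)]:
  fixes f :: "'a \<Rightarrow> 'b::euclidean_space^'m"
  assumes "f \<in> borel_measurable M"
  shows "(\<lambda>x. f x $ i) \<in> borel_measurable M"
proof -
  have "(\<lambda>v::'b^'m. v $ i) \<in> borel_measurable borel"
    by (intro borel_measurable_continuous_onI continuous_intros)
  then show ?thesis using measurable_compose[OF assms] by blast
qed

lemma meas_vecI:
  fixes f :: "'a \<Rightarrow> 'b::euclidean_space^'m"
  assumes "\<And>i. (\<lambda>x. f x $ i) \<in> borel_measurable M"
  shows "f \<in> borel_measurable M"
proof (subst borel_measurable_euclidean_space, intro ballI)
  fix b :: "'b^'m" assume "b \<in> Basis"
  then obtain i u where b: "b = axis i u" "u \<in> Basis" by (auto simp: Basis_vec_def)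
  have "(\<lambda>x. f x \<bullet> b) = (\<lambda>x. f x $ i \<bullet> u)" by (simp add: b inner_axis)
  then show "(\<lambda>x. f x \<bullet> b) \<in> borel_measurable M" using assms[of i] by simp
qed

lemma meas_mv[measurable (raw)]:
  fixes A :: "'a \<Rightarrow> complex^'d^'e" and v :: "'a \<Rightarrow> complex^'d"
  assumes "A \<in> borel_measurable M" "v \<in> borel_measurable M"
  shows "(\<lambda>x. A x *v v x) \<in> borel_measurable M"
proof (rule meas_vecI)
  fix i
  have [measurable]: "A \<in> borel_measurable M" "v \<in> borel_measurable M" by (fact assms)+
  show "(\<lambda>x. (A x *v v x) $ i) \<in> borel_measurable M"
    unfolding matrix_vector_mult_def by simp
qed

lemma borel_version:
  fixes h :: "'a::euclidean_space \<Rightarrow> 'b::euclidean_space"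
  assumes "h \<in> borel_measurable lebesgue"
  shows "\<exists>g\<in>borel_measurable lborel. AE x in lborel. h x = g x"
proof -
  have "\<forall>b\<in>Basis. \<exists>g\<in>borel_measurable lborel. AE x in lborel. h x \<bullet> b = g x"
  proof
    fix b :: 'b assume "b \<in> Basis"
    have "(\<lambda>x. h x \<bullet> b) \<in> borel_measurable (completion lborel)" using assms by simp
    from completion_ex_borel_measurable_real[OF this] show "\<exists>g\<in>borel_measurable lborel. AE x in lborel. h x \<bullet> b = g x" .
  qed
  then obtain g where g: "\<And>b. b \<in> Basis \<Longrightarrow> g b \<in> borel_measurable lborel \<and> (AE x in lborel. h x \<bullet> b = g b x)"
    by metis
  define G where "G x = (\<Sum>b\<in>Basis. g b x *\<^sub>R b)" for x
  have "G \<in> borel_measurable lborel" unfolding G_def using g by (intro borel_measurable_sum borel_measurable_scaleR) auto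
  moreover have "AE x in lborel. h x = G x"
  proof -
    have "AE x in lborel. \<forall>b\<in>Basis. h x \<bullet> b = g b x"
      by (rule AE_finite_allI) (use g in auto)
    then show ?thesis
    proof eventually_elim
      case (elim x)
      then have "G x = (\<Sum>b\<in>Basis. (h x \<bullet> b) *\<^sub>R b)" unfolding G_def by simp
      then show ?case by (simp add: euclidean_representation)
    qed
  qed
  ultimately show ?thesis by blast
qed

lemma nn_integral_translate:
  fixes \<phi> :: "'a::euclidean_space \<Rightarrow> ennreal"
  assumes "\<phi> \<in> borel_measurable borel"
  shows "(\<integral>\<^sup>+z. \<phi> z \<partial>lborel) = (\<integral>\<^sup>+u. \<phi> (u + y) \<partial>lborel)"
proof -
  have "(\<integral>\<^sup>+z. \<phi> z \<partial>lborel) = (\<integral>\<^sup>+z. \<phi> z \<partial>distr lborel borel ((+) y))"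
    by (simp add: lborel_distr_plus)
  also have "\<dots> = (\<integral>\<^sup>+u. \<phi> (y + u) \<partial>lborel)"
    using assms by (subst nn_integral_distr) auto
  finally show ?thesis by (simp add: add.commute)
qed

lemma nn_integral_reflect:
  fixes \<phi> :: "'a::euclidean_space \<Rightarrow> ennreal"
  assumes "\<phi> \<in> borel_measurable borel"
  shows "(\<integral>\<^sup>+z. \<phi> z \<partial>lborel) = (\<integral>\<^sup>+y. \<phi> (x - y) \<partial>lborel)"
proof -
  have "(\<integral>\<^sup>+z. \<phi> z \<partial>lborel) = (\<integral>\<^sup>+z. \<phi> z \<partial>density (distr lborel borel (\<lambda>y. x + (-1::real) *\<^sub>R y)) (\<lambda>_. \<bar>-1::real\<bar>^DIM('a)))"
    using lborel_affine[of "-1::real" x] by simp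
  also have "\<dots> = (\<integral>\<^sup>+z. \<phi> z \<partial>distr lborel borel (\<lambda>y. x + (-1::real) *\<^sub>R y))"
    by (simp add: density_1)
  also have "\<dots> = (\<integral>\<^sup>+y. \<phi> (x - y) \<partial>lborel)"
    using assms by (subst nn_integral_distr) auto
  finally show ?thesis .
qed

lemma powr_sum_le:
  fixes a b p :: real
  assumes "a \<ge> 0" "b \<ge> 0" "p > 0"
  shows "(a + b) powr p \<le> 2 powr p * (a powr p + b powr p)"
proof -
  have "(a + b) powr p \<le> (2 * max a b) powr p"
    using assms by (intro powr_mono2) auto
  also have "\<dots> = 2 powr p * max a b powr p" using assms by (simp add: powr_mult)
  also have "max a b powr p \<le> a powr p + b powr p"
    using assms by (auto simp: max_def)
  finally show ?thesis by (simp add: mult_left_mono)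
qed

lemma tangent_powr:
  fixes a t p :: real
  assumes "a > 0" "t \<ge> 0" "p \<ge> 1"
  shows "a powr p + p * a powr (p - 1) * (t - a) \<le> t powr p"
proof (cases "t = 0")
  case True
  have e: "a powr (p - 1) * a = a powr p"
    using assms powr_add[of a "p - 1" 1] by simp
  have "a powr p \<le> p * a powr p" using assms by simp
  also have "\<dots> = p * a powr (p - 1) * a" using e by (simp add: mult.assoc)
  finally have "a powr p \<le> p * a powr (p - 1) * a" .
  then show ?thesis using True assms by simp
next
  case False
  have d1: "((\<lambda>x. x powr p) has_real_derivative p * x powr (p - 1)) (at x)" if "x \<in> {0<..}" for x
    using that by (auto intro!: derivative_eq_intros)
  have d2: "((\<lambda>x. p * x powr (p - 1)) has_real_derivative p * ((p - 1) * x powr (p - 1 - 1))) (at x)" if "x \<in> {0<..}" for x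
    using that by (auto intro!: derivative_eq_intros)
  have "p * a powr (p - 1) * (t - a) \<le> t powr p - a powr p"
    by (rule f''_imp_f'[of "{0<..}", OF _ d1 d2]) (use assms False in \<open>auto simp: convex_real_interval\<close>)
  then show ?thesis by simp
qed


lemma mv_scaleR:
  fixes A :: "complex^'n^'m"
  shows "A *v (c *\<^sub>R x) = c *\<^sub>R (A *v x)"
  using linear_iff matrix_vector_mul_linear by blast

lemma avg_bound:
  fixes g :: "'a::euclidean_space \<Rightarrow> complex^'d" and T :: "complex^'d^'d"
  assumes C: "C \<in> sets lborel" "emeasure lborel C < \<infinity>" "0 < measure lborel C"
    and gi: "set_integrable lborel C g" and gm: "g \<in> borel_measurable lborel"
    and p: "p \<ge> 1"
  shows "ennreal (norm (T *v (v - (1 / measure lborel C) *\<^sub>R (LINT z:C|lborel. g z))) powr p)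
    \<le> ennreal (1 / measure lborel C) * (\<integral>\<^sup>+z. indicator C z * ennreal (norm (T *v (v - g z)) powr p) \<partial>lborel)"
proof -
  define \<mu> where "\<mu> = measure lborel C"
  have \<mu>: "\<mu> > 0" using C by (simp add: \<mu>_def)
  define h where "h z = norm (T *v (v - g z))" for z
  define F where "F z = indicator C z *\<^sub>R (v - g z)" for z
  have ind_int: "integrable lborel (indicator C :: _ \<Rightarrow> real)"
    using C by (intro integrable_real_indicator) auto
  have Fint: "integrable lborel F"
  proof -
    have "integrable lborel (\<lambda>z. indicator C z *\<^sub>R v - indicator C z *\<^sub>R g z)"
      using gi ind_int unfolding set_integrable_def by (intro Bochner_Integration.integrable_diff integrable_scaleR_left) auto
    then show ?thesis unfolding F_def by (simp add: scaleR_diff_right)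
  qed
  have intF: "integral\<^sup>L lborel F = \<mu> *\<^sub>R v - (LINT z:C|lborel. g z)"
  proof -
    have "integral\<^sup>L lborel F = integral\<^sup>L lborel (\<lambda>z. indicator C z *\<^sub>R v - indicator C z *\<^sub>R g z)"
      unfolding F_def by (simp add: scaleR_diff_right)
    also have "\<dots> = (LINT z|lborel. indicator C z *\<^sub>R v) - (LINT z:C|lborel. g z)"
      using gi ind_int unfolding set_integrable_def set_lebesgue_integral_def
      by (intro Bochner_Integration.integral_diff integrable_scaleR_left) auto
    also have "(LINT z|lborel. indicator C z *\<^sub>R v) = \<mu> *\<^sub>R v"
      using C by (simp add: \<mu>_def)
    finally show ?thesis .
  qed
  have TF: "integrable lborel (\<lambda>z. T *v F z)"
    by (rule integrable_bounded_linear[OF _ Fint]) simp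
  have "T *v (v - (1 / \<mu>) *\<^sub>R (LINT z:C|lborel. g z)) = (1 / \<mu>) *\<^sub>R (T *v (integral\<^sup>L lborel F))"
    using \<mu> by (simp add: intF matrix_vector_mult_diff_distrib mv_scaleR scaleR_diff_right)
  also have "T *v (integral\<^sup>L lborel F) = integral\<^sup>L lborel (\<lambda>z. T *v F z)"
    by (rule integral_bounded_linear[OF _ Fint, symmetric]) simp
  finally have eq: "norm (T *v (v - (1 / \<mu>) *\<^sub>R (LINT z:C|lborel. g z))) = (1 / \<mu>) * norm (integral\<^sup>L lborel (\<lambda>z. T *v F z))"
    using \<mu> by simp
  have nF: "norm (T *v F z) = indicator C z * h z" for z
    by (simp add: F_def h_def indicator_def mv_scaleR)
  define a where "a = (1 / \<mu>) * (LINT z|lborel. indicator C z * h z)"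
  have le_a: "norm (T *v (v - (1 / \<mu>) *\<^sub>R (LINT z:C|lborel. g z))) \<le> a"
    unfolding eq a_def using \<mu> integral_norm_bound[of lborel "\<lambda>z. T *v F z"] nF
    by (intro mult_left_mono) auto
  have hm: "h \<in> borel_measurable lborel" unfolding h_def using gm by measurable
  have hint: "integrable lborel (\<lambda>z. indicator C z * h z)"
    using integrable_norm[OF TF] nF by simp
  have a0: "a \<ge> 0" unfolding a_def using \<mu> by (auto simp: h_def intro!: integral_nonneg_AE)
  have main: "ennreal (a powr p) \<le> ennreal (1 / \<mu>) * (\<integral>\<^sup>+z. indicator C z * ennreal (h z powr p) \<partial>lborel)"
  proof (cases "a = 0")
    case True then show ?thesis by simp
  next
    case False
    then have apos: "a > 0" using a0 by simp
    show ?thesis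
    proof (cases "(\<integral>\<^sup>+z. indicator C z * ennreal (h z powr p) \<partial>lborel) = \<infinity>")
      case True then show ?thesis using \<mu> by (simp add: ennreal_mult_top)
    next
      case False
      have eqi: "(\<integral>\<^sup>+z. indicator C z * ennreal (h z powr p) \<partial>lborel) = (\<integral>\<^sup>+z. ennreal (indicator C z * h z powr p) \<partial>lborel)"
        by (intro nn_integral_cong) (simp add: indicator_def)
      have hpm: "(\<lambda>z. indicator C z * h z powr p) \<in> borel_measurable lborel" using hm C by measurable
      have hpi: "integrable lborel (\<lambda>z. indicator C z * h z powr p)"
        using False eqi hpm by (intro integrableI_nonneg) (auto simp: top.not_eq_extremum)
      have tang: "indicator C z * (a powr p + p * a powr (p - 1) * (h z - a)) \<le> indicator C z * h z powr p" for z
        using tangent_powr[OF apos _ p, of "h z"] by (auto simp: indicator_def h_def)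
      define A0 where "A0 = a powr p"
      define P where "P = p * a powr (p - 1)"
      have fun_eq: "(\<lambda>z. indicator C z * (A0 + P * (h z - a))) = (\<lambda>z. (A0 - P * a) * indicator C z + P * (indicator C z * h z))"
        by (rule ext) (simp add: right_diff_distrib split: split_indicator)
      have i1: "integrable lborel (\<lambda>z. indicator C z * (A0 + P * (h z - a)))"
        unfolding fun_eq using ind_int hint by (intro Bochner_Integration.integrable_add integrable_mult_right) auto
      have "(LINT z|lborel. indicator C z * (A0 + P * (h z - a))) = (A0 - P * a) * \<mu> + P * (LINT z|lborel. indicator C z * h z)"
        unfolding fun_eq using ind_int hint C by (simp add: \<mu>_def)
      also have "(LINT z|lborel. indicator C z * h z) = \<mu> * a" unfolding a_def using \<mu> by simp
      also have "(A0 - P * a) * \<mu> + P * (\<mu> * a) = \<mu> * A0" by (simp add: algebra_simps)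
      finally have "(LINT z|lborel. indicator C z * (A0 + P * (h z - a))) = \<mu> * A0" .
      moreover have "(LINT z|lborel. indicator C z * (A0 + P * (h z - a))) \<le> (LINT z|lborel. indicator C z * h z powr p)"
        by (intro integral_mono i1 hpi) (use tang in \<open>simp add: A0_def P_def\<close>)
      ultimately have "\<mu> * A0 \<le> (LINT z|lborel. indicator C z * h z powr p)" by simp
      then have "a powr p \<le> (1 / \<mu>) * (LINT z|lborel. indicator C z * h z powr p)"
        using \<mu> by (simp add: A0_def pos_le_divide_eq mult.commute)
      moreover have "ennreal (LINT z|lborel. indicator C z * h z powr p) = (\<integral>\<^sup>+z. ennreal (indicator C z * h z powr p) \<partial>lborel)"
        by (rule nn_integral_eq_integral[symmetric]) (use hpi in auto)
      moreover have "0 \<le> (LINT z|lborel. indicator C z * h z powr p)"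
        by (intro integral_nonneg_AE) (auto simp: indicator_def)
      ultimately show ?thesis
      proof -
        assume le: "a powr p \<le> (1 / \<mu>) * (LINT z|lborel. indicator C z * h z powr p)"
          and E: "ennreal (LINT z|lborel. indicator C z * h z powr p) = (\<integral>\<^sup>+z. ennreal (indicator C z * h z powr p) \<partial>lborel)"
          and L0: "0 \<le> (LINT z|lborel. indicator C z * h z powr p)"
        have "ennreal (a powr p) \<le> ennreal ((1 / \<mu>) * (LINT z|lborel. indicator C z * h z powr p))"
          using le by (rule ennreal_leI)
        also have "\<dots> = ennreal (1 / \<mu>) * ennreal (LINT z|lborel. indicator C z * h z powr p)"
          using \<mu> L0 by (intro ennreal_mult) auto
        finally show ?thesis using E eqi by simp
      qed
    qed
  qed
  have "ennreal (norm (T *v (v - (1 / \<mu>) *\<^sub>R (LINT z:C|lborel. g z))) powr p) \<le> ennreal (a powr p)"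
    using le_a p by (intro ennreal_leI powr_mono2) auto
  also note main
  finally show ?thesis unfolding h_def \<mu>_def .
qed


lemma pos_lower:
  fixes W' :: "'a::euclidean_space \<Rightarrow> complex^'d^'d"
  assumes Wm: "W' \<in> borel_measurable lborel"
    and inv: "AE x in lborel. \<forall>v. v \<noteq> 0 \<longrightarrow> W' x *v v \<noteq> 0"
    and S: "S \<in> sets lborel" "emeasure lborel S > 0"
    and p: "p > 0"
  shows "\<exists>\<alpha>>0. \<forall>v. ennreal (\<alpha> * norm v powr p) \<le> (\<integral>\<^sup>+x. indicator S x * ennreal (norm (W' x *v v) powr p) \<partial>lborel)"
proof (rule ccontr)
  define \<Phi> where "\<Phi> v = (\<integral>\<^sup>+x. indicator S x * ennreal (norm (W' x *v v) powr p) \<partial>lborel)" for v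
  have meas: "(\<lambda>x. indicator S x * ennreal (norm (W' x *v v) powr p)) \<in> borel_measurable lborel" for v
    using Wm S by measurable
  have hom: "\<Phi> (c *\<^sub>R v) = ennreal (\<bar>c\<bar> powr p) * \<Phi> v" for c v
  proof -
    have "\<Phi> (c *\<^sub>R v) = (\<integral>\<^sup>+x. ennreal (\<bar>c\<bar> powr p) * (indicator S x * ennreal (norm (W' x *v v) powr p)) \<partial>lborel)"
      unfolding \<Phi>_def
      by (intro nn_integral_cong) (simp add: mv_scaleR powr_mult ennreal_mult' mult_ac)
    also have "\<dots> = ennreal (\<bar>c\<bar> powr p) * \<Phi> v"
      unfolding \<Phi>_def by (rule nn_integral_cmult[OF meas])
    finally show ?thesis .
  qed
  assume neg: "\<not> ?thesis"
  have "\<forall>k::nat. \<exists>v. \<Phi> v < ennreal (inverse (real (Suc k)) * norm v powr p)"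
  proof
    fix k :: nat
    have pos: "inverse (real (Suc k)) > 0" by simp
    from neg have "\<forall>\<alpha>>0. \<exists>v. \<not> ennreal (\<alpha> * norm v powr p) \<le> \<Phi> v" unfolding \<Phi>_def by blast
    then show "\<exists>v. \<Phi> v < ennreal (inverse (real (Suc k)) * norm v powr p)" using pos by (auto simp: not_le)
  qed
  then obtain v where v: "\<And>k. \<Phi> (v k) < ennreal (inverse (real (Suc k)) * norm (v k) powr p)"
    by metis
  have vnz: "v k \<noteq> 0" for k
    using v[of k] by (auto simp: \<Phi>_def)
  define u where "u k = (1 / norm (v k)) *\<^sub>R v k" for k
  have u1: "u k \<in> sphere 0 1" for k using vnz[of k] by (simp add: u_def)
  have uk: "\<Phi> (u k) < ennreal (inverse (real (Suc k)))" for k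
  proof -
    have nv: "norm (v k) > 0" using vnz[of k] by simp
    have "\<Phi> (u k) = ennreal ((1 / norm (v k)) powr p) * \<Phi> (v k)"
      unfolding u_def hom using nv by simp
    also have "\<dots> < ennreal ((1 / norm (v k)) powr p) * ennreal (inverse (real (Suc k)) * norm (v k) powr p)"
      using nv by (intro ennreal_mult_strict_left_mono v) auto
    also have "\<dots> = ennreal ((1 / norm (v k)) powr p * (inverse (real (Suc k)) * norm (v k) powr p))"
      using nv by (simp add: ennreal_mult)
    also have "(1 / norm (v k)) powr p * (inverse (real (Suc k)) * norm (v k) powr p) = inverse (real (Suc k))"
      using nv by (simp add: powr_divide)
    finally show ?thesis .
  qed
  obtain l r where l: "l \<in> sphere 0 1" and r: "strict_mono r" and lim: "(u \<circ> r) \<longlonglongrightarrow> l"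
    using seq_compactE[OF compact_imp_seq_compact[OF compact_sphere], of u 0 1] u1 by blast
  have lim0: "(\<lambda>k. \<Phi> (u (r k))) \<longlonglongrightarrow> 0"
  proof (rule tendsto_sandwich[of "\<lambda>_. 0" _ _ "\<lambda>k. ennreal (inverse (real (Suc k)))"])
    show "\<forall>\<^sub>F k in sequentially. \<Phi> (u (r k)) \<le> ennreal (inverse (real (Suc k)))"
    proof (intro always_eventually allI)
      fix k
      have "\<Phi> (u (r k)) \<le> ennreal (inverse (real (Suc (r k))))" using uk less_imp_le by blast
      also have "\<dots> \<le> ennreal (inverse (real (Suc k)))"
        using seq_suble[OF r, of k] by (intro ennreal_leI) (simp add: field_simps)
      finally show "\<Phi> (u (r k)) \<le> ennreal (inverse (real (Suc k)))" .
    qed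
    show "(\<lambda>k. ennreal (inverse (real (Suc k)))) \<longlonglongrightarrow> 0"
      using LIMSEQ_inverse_real_of_nat by (metis ennreal_0 tendsto_ennrealI)
  qed auto
  have ptw: "(\<lambda>k. indicator S x * ennreal (norm (W' x *v u (r k)) powr p)) \<longlonglongrightarrow> indicator S x * ennreal (norm (W' x *v l) powr p)" for x
  proof -
    have "(\<lambda>k. W' x *v u (r k)) \<longlonglongrightarrow> W' x *v l"
      using lim by (intro bounded_linear.tendsto[OF matrix_vector_mul_bounded_linear]) (simp add: comp_def)
    then have "(\<lambda>k. norm (W' x *v u (r k)) powr p) \<longlonglongrightarrow> norm (W' x *v l) powr p"
      using p by (intro tendsto_powr' tendsto_norm) auto
    then have "(\<lambda>k. ennreal (norm (W' x *v u (r k)) powr p)) \<longlonglongrightarrow> ennreal (norm (W' x *v l) powr p)"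
      by (rule tendsto_ennrealI)
    then show ?thesis by (intro ennreal_tendsto_cmult) (auto simp: indicator_def)
  qed
  have "\<Phi> l = (\<integral>\<^sup>+x. liminf (\<lambda>k. indicator S x * ennreal (norm (W' x *v u (r k)) powr p)) \<partial>lborel)"
    unfolding \<Phi>_def by (intro nn_integral_cong) (simp add: lim_imp_Liminf[OF _ ptw])
  also have "\<dots> \<le> liminf (\<lambda>k. \<Phi> (u (r k)))"
    unfolding \<Phi>_def by (rule nn_integral_liminf) (rule meas)
  also have "\<dots> = 0" by (rule lim_imp_Liminf[OF _ lim0]) simp
  finally have "\<Phi> l = 0" by simp
  then have "AE x in lborel. indicator S x * ennreal (norm (W' x *v l) powr p) = 0"
    unfolding \<Phi>_def using meas by (simp add: nn_integral_0_iff_AE)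
  then have "AE x in lborel. x \<notin> S"
    using inv
  proof eventually_elim
    case (elim x)
    have "l \<noteq> 0" using l by auto
    then have "W' x *v l \<noteq> 0" using elim by auto
    then show ?case using elim p by (auto simp: indicator_def)
  qed
  then have "S \<in> null_sets lborel" using S by (simp add: AE_iff_null_sets)
  then show False using S by (auto simp: null_sets_def)
qed


definition key :: "real \<Rightarrow> real^'n \<Rightarrow> ('n \<Rightarrow> int)" where
  "key \<delta> x = (\<lambda>i. \<lfloor>x$i / \<delta>\<rfloor>)"

definition cell :: "real \<Rightarrow> ('n \<Rightarrow> int) \<Rightarrow> (real^'n) set" where
  "cell \<delta> k = {x. key \<delta> x = k}"

definition Ybox :: "real \<Rightarrow> (real^'n) set" where
  "Ybox \<delta> = box (- (\<delta> *\<^sub>R 1)) (\<delta> *\<^sub>R 1)"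

lemma mem_cell:
  assumes "\<delta> > 0"
  shows "x \<in> cell \<delta> k \<longleftrightarrow> (\<forall>i. \<delta> * k i \<le> x$i \<and> x$i < \<delta> * (k i + 1))"
proof -
  have "\<lfloor>x$i / \<delta>\<rfloor> = k i \<longleftrightarrow> \<delta> * k i \<le> x$i \<and> x$i < \<delta> * (k i + 1)" for i
    using assms by (simp add: floor_eq_iff pos_le_divide_eq pos_divide_less_eq mult.commute)
  then show ?thesis unfolding cell_def key_def by (auto simp: fun_eq_iff)
qed

lemma cell_sets[measurable]:
  fixes k :: "'n::finite \<Rightarrow> int"
  shows "cell \<delta> k \<in> sets (lborel :: (real^'n) measure)"
proof -
  have "{x \<in> space (lborel :: (real^'n) measure). \<forall>i. \<lfloor>x$i / \<delta>\<rfloor> = k i} \<in> sets lborel" by measurable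
  then show ?thesis by (simp add: cell_def key_def fun_eq_iff)
qed

lemma prod_Basis_const:
  fixes v :: "real^'n"
  assumes "\<And>i. v $ i = c"
  shows "(\<Prod>b\<in>Basis. v \<bullet> b) = c ^ CARD('n)"
proof -
  have "(\<Prod>b\<in>Basis. v \<bullet> b) = (\<Prod>b\<in>(Basis::(real^'n) set). c)"
  proof (intro prod.cong refl)
    fix b :: "real^'n" assume "b \<in> Basis"
    then obtain i where "b = axis i 1" by (auto simp: Basis_vec_def)
    then show "v \<bullet> b = c" using assms by (simp add: inner_axis)
  qed
  then show ?thesis by simp
qed

lemma emeasure_cell:
  fixes k :: "'n::finite \<Rightarrow> int"
  assumes "\<delta> > 0"
  shows "emeasure (lborel :: (real^'n) measure) (cell \<delta> k) = ennreal (\<delta> ^ CARD('n))"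
proof -
  define lo :: "real^'n" where "lo = (\<chi> i. \<delta> * k i)"
  define hi :: "real^'n" where "hi = (\<chi> i. \<delta> * (k i + 1))"
  have sub1: "box lo hi \<subseteq> cell \<delta> k" using assms by (auto simp: mem_box_cart mem_cell lo_def hi_def less_imp_le)
  have sub2: "cell \<delta> k \<subseteq> cbox lo hi" using assms by (auto simp: mem_box_cart mem_cell lo_def hi_def less_imp_le)
  have d: "(hi - lo) $ i = \<delta>" for i by (simp add: lo_def hi_def algebra_simps)
  have le: "\<forall>b\<in>Basis. lo \<bullet> b \<le> hi \<bullet> b"
    using assms by (auto simp: Basis_vec_def inner_axis lo_def hi_def)
  have eb: "emeasure lborel (box lo hi) = ennreal (\<delta> ^ CARD('n))"
    using le by (simp add: emeasure_lborel_box_eq prod_Basis_const[OF d])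
  have ec: "emeasure lborel (cbox lo hi) = ennreal (\<delta> ^ CARD('n))"
    using le by (simp add: emeasure_lborel_cbox_eq prod_Basis_const[OF d])
  have "emeasure lborel (box lo hi) \<le> emeasure lborel (cell \<delta> k)" by (intro emeasure_mono sub1 cell_sets)
  moreover have "emeasure lborel (cell \<delta> k) \<le> emeasure lborel (cbox lo hi)" by (intro emeasure_mono sub2) simp
  ultimately show ?thesis using eb ec by simp
qed

lemma measure_cell:
  fixes k :: "'n::finite \<Rightarrow> int"
  assumes "\<delta> > 0"
  shows "measure (lborel :: (real^'n) measure) (cell \<delta> k) = \<delta> ^ CARD('n)"
  using emeasure_cell[OF assms] assms by (simp add: measure_def)

lemma emeasure_Ybox:
  assumes "\<delta> > 0"
  shows "emeasure (lborel :: (real^'n) measure) (Ybox \<delta>) = ennreal ((2 * \<delta>) ^ CARD('n))"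
proof -
  have d: "((\<delta> *\<^sub>R 1) - (- (\<delta> *\<^sub>R 1))) $ i = 2 * \<delta>" for i :: 'n by simp
  have le: "\<forall>b\<in>(Basis::(real^'n) set). (- (\<delta> *\<^sub>R 1)) \<bullet> b \<le> (\<delta> *\<^sub>R 1) \<bullet> b"
    using assms by (auto simp: Basis_vec_def inner_axis)
  show ?thesis unfolding Ybox_def
    by (subst emeasure_lborel_box_eq) (simp only: if_P[OF le] prod_Basis_const[OF d])
qed

lemma Ybox_sets[measurable]: "Ybox \<delta> \<in> sets lborel"
  unfolding Ybox_def by simp

lemma cell_diff_Ybox:
  assumes "\<delta> > 0" "x \<in> cell \<delta> k" "z \<in> cell \<delta> k"
  shows "x - z \<in> Ybox \<delta>"
  unfolding Ybox_def mem_box_cart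
proof
  fix i
  have "\<delta> * k i \<le> x$i \<and> x$i < \<delta> * (k i + 1)" "\<delta> * k i \<le> z$i \<and> z$i < \<delta> * (k i + 1)"
    using assms by (auto simp: mem_cell)
  then show "(- (\<delta> *\<^sub>R 1)) $ i < (x - z) $ i \<and> (x - z) $ i < (\<delta> *\<^sub>R 1) $ i"
    by (simp add: algebra_simps)
qed

lemma Ybox_norm:
  fixes y :: "real^'n::finite"
  assumes "y \<in> Ybox \<delta>"
  shows "norm y < real CARD('n) * \<delta>"
proof -
  have "\<bar>y $ i\<bar> < \<delta>" for i
  proof -
    have "(- (\<delta> *\<^sub>R 1)) $ i < y $ i \<and> y $ i < (\<delta> *\<^sub>R (1::real^'n)) $ i"
      using assms unfolding Ybox_def mem_box_cart by blast
    then show ?thesis by (simp add: abs_less_iff)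
  qed
  then have "(\<Sum>i\<in>UNIV. \<bar>y $ i\<bar>) < (\<Sum>i\<in>(UNIV::'n set). \<delta>)"
    by (intro sum_strict_mono) auto
  then show ?thesis using norm_le_l1_cart[of y] by simp
qed


definition Mf :: "(real^'n \<Rightarrow> complex^'d^'d) \<Rightarrow> real \<Rightarrow> (real^'n \<Rightarrow> complex^'d) \<Rightarrow> ennreal" where
  "Mf W p h = (\<integral>\<^sup>+x. ennreal (norm (W x *v h x) powr p) \<partial>lborel)"

lemma ennreal_powr_sum_le:
  fixes a b p :: real
  assumes "0 \<le> c" "c \<le> a + b" "a \<ge> 0" "b \<ge> 0" "p > 0"
  shows "ennreal (c powr p) \<le> ennreal (2 powr p) * (ennreal (a powr p) + ennreal (b powr p))"
proof -
  have "c powr p \<le> (a + b) powr p" using assms by (intro powr_mono2) auto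
  also have "\<dots> \<le> 2 powr p * (a powr p + b powr p)" using assms by (intro powr_sum_le) auto
  finally have "ennreal (c powr p) \<le> ennreal (2 powr p * (a powr p + b powr p))" by (rule ennreal_leI)
  also have "\<dots> = ennreal (2 powr p) * (ennreal (a powr p) + ennreal (b powr p))"
    by (simp add: ennreal_mult ennreal_plus)
  finally show ?thesis .
qed

lemma Mf_tri:
  fixes W :: "real^'n \<Rightarrow> complex^'d^'d"
  assumes Wm: "W \<in> borel_measurable lborel" and am: "a \<in> borel_measurable lborel" and bm: "b \<in> borel_measurable lborel"
    and p: "p > 0"
  shows "Mf W p (\<lambda>x. a x + b x) \<le> ennreal (2 powr p) * (Mf W p a + Mf W p b)"
proof -
  note [measurable] = Wm am bm
  have m1: "(\<lambda>x. ennreal (norm (W x *v a x) powr p)) \<in> borel_measurable lborel" by measurable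
  have m2: "(\<lambda>x. ennreal (norm (W x *v b x) powr p)) \<in> borel_measurable lborel" by measurable
  have "Mf W p (\<lambda>x. a x + b x) \<le> (\<integral>\<^sup>+x. ennreal (2 powr p) * (ennreal (norm (W x *v a x) powr p) + ennreal (norm (W x *v b x) powr p)) \<partial>lborel)"
    unfolding Mf_def
  proof (intro nn_integral_mono ennreal_powr_sum_le)
    fix x
    show "norm (W x *v (a x + b x)) \<le> norm (W x *v a x) + norm (W x *v b x)"
      by (simp add: matrix_vector_right_distrib norm_triangle_ineq)
  qed (use p in auto)
  also have "\<dots> = ennreal (2 powr p) * (Mf W p a + Mf W p b)"
    unfolding Mf_def using m1 m2 by (simp add: nn_integral_cmult nn_integral_add)
  finally show ?thesis .
qed

lemma le_one_plus_powr:
  fixes t p :: real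
  assumes "t \<ge> 0" "p \<ge> 1"
  shows "t \<le> 1 + t powr p"
proof (cases "t \<le> 1")
  case True
  have "0 \<le> t powr p" by simp
  then show ?thesis using True by linarith
next
  case False
  then have "t powr 1 \<le> t powr p" using assms by (intro powr_mono) auto
  then show ?thesis using False by simp
qed

lemma loc_int:
  fixes W' :: "real^'n \<Rightarrow> complex^'d^'d" and g :: "real^'n \<Rightarrow> complex^'d"
  assumes Wm: "W' \<in> borel_measurable lborel"
    and inv: "AE x in lborel. \<forall>v. v \<noteq> 0 \<longrightarrow> W' x *v v \<noteq> 0"
    and p: "p \<ge> 1" and \<delta>: "\<delta> > 0"
    and gm: "g \<in> borel_measurable lborel"
    and gfin: "Mf W' p g < \<infinity>"
    and Eb: "\<forall>y\<in>Ybox \<delta>. Mf W' p (\<lambda>x. g (x - y) - g x) \<le> ennreal Ebd"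
  shows "set_integrable lborel (cell \<delta> k) g"
proof -
  note [measurable] = Wm gm
  define \<Phi> where "\<Phi> x y = ennreal (norm (W' x *v g (x - y)) powr p)" for x y
  have step1: "(\<integral>\<^sup>+x. \<Phi> x y \<partial>lborel) \<le> ennreal (2 powr p) * (ennreal Ebd + Mf W' p g)" if y: "y \<in> Ybox \<delta>" for y
  proof -
    have "(\<integral>\<^sup>+x. \<Phi> x y \<partial>lborel) = Mf W' p (\<lambda>x. (g (x - y) - g x) + g x)" unfolding \<Phi>_def Mf_def by simp
    also have "\<dots> \<le> ennreal (2 powr p) * (Mf W' p (\<lambda>x. g (x - y) - g x) + Mf W' p g)"
      using p by (intro Mf_tri) auto
    also have "\<dots> \<le> ennreal (2 powr p) * (ennreal Ebd + Mf W' p g)"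
      using Eb y by (intro mult_left_mono add_right_mono) auto
    finally show ?thesis .
  qed
  define Bd where "Bd = ennreal (2 powr p) * (ennreal Ebd + Mf W' p g)"
  have Bdfin: "Bd < \<infinity>" using gfin by (simp add: Bd_def ennreal_mult_less_top)
  have step2: "(\<integral>\<^sup>+y. indicator (Ybox \<delta>) y * (\<integral>\<^sup>+x. \<Phi> x y \<partial>lborel) \<partial>lborel) < \<infinity>"
  proof -
    have "(\<integral>\<^sup>+y. indicator (Ybox \<delta>) y * (\<integral>\<^sup>+x. \<Phi> x y \<partial>lborel) \<partial>lborel) \<le> (\<integral>\<^sup>+y. Bd * indicator (Ybox \<delta>) y \<partial>(lborel :: (real^'n) measure))"
      by (intro nn_integral_mono) (use step1 in \<open>auto simp: indicator_def Bd_def\<close>)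
    also have "\<dots> = Bd * emeasure (lborel :: (real^'n) measure) (Ybox \<delta>)" by (rule nn_integral_cmult_indicator) (rule Ybox_sets)
    also have "\<dots> < \<infinity>" using Bdfin emeasure_Ybox[OF \<delta>, where 'n='n] by (simp add: ennreal_mult_less_top)
    finally show ?thesis .
  qed
  have step3: "(\<integral>\<^sup>+y. indicator (Ybox \<delta>) y * (\<integral>\<^sup>+x. \<Phi> x y \<partial>lborel) \<partial>lborel)
      = (\<integral>\<^sup>+z. (\<integral>\<^sup>+y. indicator (Ybox \<delta>) y * ennreal (norm (W' (z + y) *v g z) powr p) \<partial>lborel) \<partial>lborel)"
  proof -
    have tr: "(\<integral>\<^sup>+x. \<Phi> x y \<partial>lborel) = (\<integral>\<^sup>+z. ennreal (norm (W' (z + y) *v g z) powr p) \<partial>lborel)" for y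
      unfolding \<Phi>_def by (subst nn_integral_translate[where y=y]) simp_all
    have "(\<integral>\<^sup>+y. indicator (Ybox \<delta>) y * (\<integral>\<^sup>+x. \<Phi> x y \<partial>lborel) \<partial>lborel)
        = (\<integral>\<^sup>+y. (\<integral>\<^sup>+z. indicator (Ybox \<delta>) y * ennreal (norm (W' (z + y) *v g z) powr p) \<partial>lborel) \<partial>lborel)"
      unfolding tr by (intro nn_integral_cong) (simp add: nn_integral_cmult)
    also have "\<dots> = (\<integral>\<^sup>+z. (\<integral>\<^sup>+y. indicator (Ybox \<delta>) y * ennreal (norm (W' (z + y) *v g z) powr p) \<partial>lborel) \<partial>lborel)"
      by (rule lborel_pair.Fubini') measurable
    finally show ?thesis .
  qed
  obtain \<alpha> where \<alpha>: "\<alpha> > 0" "\<forall>v. ennreal (\<alpha> * norm v powr p) \<le> (\<integral>\<^sup>+u. indicator (cell \<delta> k) u * ennreal (norm (W' u *v v) powr p) \<partial>lborel)"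
    using pos_lower[OF Wm inv cell_sets, of \<delta> k p] emeasure_cell[OF \<delta>, of k] \<delta> p by auto
  have step4: "ennreal \<alpha> * (indicator (cell \<delta> k) z * ennreal (norm (g z) powr p)) \<le> (\<integral>\<^sup>+y. indicator (Ybox \<delta>) y * ennreal (norm (W' (z + y) *v g z) powr p) \<partial>lborel)" for z
  proof (cases "z \<in> cell \<delta> k")
    case False then show ?thesis by simp
  next
    case True
    have "ennreal \<alpha> * (indicator (cell \<delta> k) z * ennreal (norm (g z) powr p)) = ennreal (\<alpha> * norm (g z) powr p)"
      using True \<alpha> by (simp add: ennreal_mult)
    also have "\<dots> \<le> (\<integral>\<^sup>+u. indicator (cell \<delta> k) u * ennreal (norm (W' u *v g z) powr p) \<partial>lborel)"
      using \<alpha> by blast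
    also have "\<dots> \<le> (\<integral>\<^sup>+u. indicator (Ybox \<delta>) (u - z) * ennreal (norm (W' u *v g z) powr p) \<partial>lborel)"
      by (intro nn_integral_mono) (auto simp: indicator_def cell_diff_Ybox[OF \<delta> _ True])
    also have "\<dots> = (\<integral>\<^sup>+y. indicator (Ybox \<delta>) y * ennreal (norm (W' (z + y) *v g z) powr p) \<partial>lborel)"
      by (subst nn_integral_translate[where y="-z"]) simp_all
    finally show ?thesis .
  qed
  have "ennreal \<alpha> * (\<integral>\<^sup>+z. indicator (cell \<delta> k) z * ennreal (norm (g z) powr p) \<partial>lborel)
      = (\<integral>\<^sup>+z. ennreal \<alpha> * (indicator (cell \<delta> k) z * ennreal (norm (g z) powr p)) \<partial>lborel)"
    by (rule nn_integral_cmult[symmetric]) measurable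
  also have "\<dots> \<le> (\<integral>\<^sup>+z. (\<integral>\<^sup>+y. indicator (Ybox \<delta>) y * ennreal (norm (W' (z + y) *v g z) powr p) \<partial>lborel) \<partial>lborel)"
    by (intro nn_integral_mono step4)
  also have "\<dots> < \<infinity>" using step2 step3 by simp
  finally have "ennreal \<alpha> * (\<integral>\<^sup>+z. indicator (cell \<delta> k) z * ennreal (norm (g z) powr p) \<partial>lborel) < \<infinity>" .
  then have fin: "(\<integral>\<^sup>+z. indicator (cell \<delta> k) z * ennreal (norm (g z) powr p) \<partial>lborel) < \<infinity>"
    using \<alpha> by (auto simp: ennreal_mult_less_top)
  show ?thesis unfolding set_integrable_def
  proof (rule integrableI_bounded)
    show "(\<lambda>z. indicat_real (cell \<delta> k) z *\<^sub>R g z) \<in> borel_measurable lborel" by measurable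
    have "(\<integral>\<^sup>+z. ennreal (norm (indicat_real (cell \<delta> k) z *\<^sub>R g z)) \<partial>lborel)
        \<le> (\<integral>\<^sup>+z. indicator (cell \<delta> k) z + indicator (cell \<delta> k) z * ennreal (norm (g z) powr p) \<partial>lborel)"
    proof (intro nn_integral_mono)
      fix z
      have "norm (g z) \<le> 1 + norm (g z) powr p" using p by (intro le_one_plus_powr) auto
      then have "ennreal (norm (g z)) \<le> ennreal (1 + norm (g z) powr p)" by (rule ennreal_leI)
      then have "ennreal (norm (g z)) \<le> 1 + ennreal (norm (g z) powr p)" by (simp add: ennreal_plus)
      then show "ennreal (norm (indicat_real (cell \<delta> k) z *\<^sub>R g z)) \<le> indicator (cell \<delta> k) z + indicator (cell \<delta> k) z * ennreal (norm (g z) powr p)"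
        by (auto simp: indicator_def)
    qed
    also have "\<dots> = emeasure lborel (cell \<delta> k) + (\<integral>\<^sup>+z. indicator (cell \<delta> k) z * ennreal (norm (g z) powr p) \<partial>lborel)"
    proof -
      have ni: "(\<integral>\<^sup>+z. indicator (cell \<delta> k) z \<partial>lborel) = emeasure lborel (cell \<delta> k)"
        by (rule nn_integral_indicator) (rule cell_sets)
      show ?thesis by (subst nn_integral_add) (auto simp: ni)
    qed
    also have "\<dots> < \<infinity>" using fin emeasure_cell[OF \<delta>, of k] by simp
    finally show "(\<integral>\<^sup>+z. ennreal (norm (indicat_real (cell \<delta> k) z *\<^sub>R g z)) \<partial>lborel) < \<infinity>" .
  qed
qed


definition coef :: "real \<Rightarrow> (real^'n \<Rightarrow> complex^'d) \<Rightarrow> ('n \<Rightarrow> int) \<Rightarrow> complex^'d" where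
  "coef \<delta> g k = (1 / measure lborel (cell \<delta> k)) *\<^sub>R (LINT z:cell \<delta> k|lborel. g z)"

lemma mem_cell_key: "x \<in> cell \<delta> k \<longleftrightarrow> key \<delta> x = k"
  by (simp add: cell_def)

lemma cell_sets_borel[simp]:
  fixes k :: "'n::finite \<Rightarrow> int"
  shows "cell \<delta> k \<in> sets (borel :: (real^'n) measure)"
  using cell_sets[of \<delta> k] by simp

lemma sum_ind_cells:
  fixes KS :: "('n::finite \<Rightarrow> int) set"
  assumes "finite KS" "\<delta> > 0"
  shows "(\<Sum>k\<in>KS. indicator (cell \<delta> k) x * indicator (cell \<delta> k) z) \<le> (indicator (Ybox \<delta>) (x - z) :: ennreal)"
proof -
  have "(\<Sum>k\<in>KS. indicator (cell \<delta> k) x * indicator (cell \<delta> k) z) = (\<Sum>k\<in>KS. if key \<delta> x = k then indicator (cell \<delta> k) z else (0::ennreal))"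
    by (intro sum.cong refl) (simp add: indicator_def mem_cell_key)
  also have "\<dots> = (if key \<delta> x \<in> KS then indicator (cell \<delta> (key \<delta> x)) z else 0)"
    using assms(1) by (simp add: sum.delta)
  also have "\<dots> \<le> indicator (Ybox \<delta>) (x - z)"
  proof (cases "z \<in> cell \<delta> (key \<delta> x)")
    case True
    have "x \<in> cell \<delta> (key \<delta> x)" by (simp add: mem_cell_key)
    then have "x - z \<in> Ybox \<delta>" using cell_diff_Ybox[OF assms(2) _ True] by blast
    then show ?thesis using True by (auto simp: indicator_def)
  qed (auto split: split_indicator)
  finally show ?thesis .
qed

lemma main_err:
  fixes W' :: "real^'n \<Rightarrow> complex^'d^'d" and g :: "real^'n \<Rightarrow> complex^'d" and KS :: "('n \<Rightarrow> int) set"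
  assumes Wm: "W' \<in> borel_measurable lborel"
    and p: "p \<ge> 1" and \<delta>: "\<delta> > 0"
    and gm: "g \<in> borel_measurable lborel"
    and gi: "\<And>k. set_integrable lborel (cell \<delta> k) g"
    and Eb: "\<forall>y\<in>Ybox \<delta>. Mf W' p (\<lambda>x. g (x - y) - g x) \<le> ennreal Ebd" and Ebd: "Ebd \<ge> 0"
    and KS: "finite KS"
  shows "(\<Sum>k\<in>KS. \<integral>\<^sup>+x. indicator (cell \<delta> k) x * ennreal (norm (W' x *v (g x - coef \<delta> g k)) powr p) \<partial>lborel)
    \<le> ennreal (2 ^ CARD('n) * Ebd)"
proof -
  note [measurable] = Wm gm
  define G where "G x z = ennreal (norm (W' x *v (g x - g z)) powr p)" for x z
  have Gm[measurable]: "(\<lambda>(x, z). G x z) \<in> borel_measurable (lborel \<Otimes>\<^sub>M lborel)"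
    unfolding G_def by measurable
  define \<mu> where "\<mu> = (\<delta> ^ CARD('n) :: real)"
  have \<mu>: "\<mu> > 0" using \<delta> by (simp add: \<mu>_def)
  have s1: "(\<integral>\<^sup>+x. indicator (cell \<delta> k) x * ennreal (norm (W' x *v (g x - coef \<delta> g k)) powr p) \<partial>lborel)
      \<le> ennreal (1 / \<mu>) * (\<integral>\<^sup>+x. \<integral>\<^sup>+z. indicator (cell \<delta> k) x * indicator (cell \<delta> k) z * G x z \<partial>lborel \<partial>lborel)" for k
  proof -
    have "(\<integral>\<^sup>+x. indicator (cell \<delta> k) x * ennreal (norm (W' x *v (g x - coef \<delta> g k)) powr p) \<partial>lborel)
      \<le> (\<integral>\<^sup>+x. ennreal (1 / \<mu>) * (\<integral>\<^sup>+z. indicator (cell \<delta> k) x * indicator (cell \<delta> k) z * G x z \<partial>lborel) \<partial>lborel)"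
    proof (intro nn_integral_mono)
      fix x
      show "indicator (cell \<delta> k) x * ennreal (norm (W' x *v (g x - coef \<delta> g k)) powr p)
          \<le> ennreal (1 / \<mu>) * (\<integral>\<^sup>+z. indicator (cell \<delta> k) x * indicator (cell \<delta> k) z * G x z \<partial>lborel)"
      proof (cases "x \<in> cell \<delta> k")
        case False then show ?thesis by simp
      next
        case True
        have "ennreal (norm (W' x *v (g x - coef \<delta> g k)) powr p)
          \<le> ennreal (1 / measure lborel (cell \<delta> k)) * (\<integral>\<^sup>+z. indicator (cell \<delta> k) z * ennreal (norm (W' x *v (g x - g z)) powr p) \<partial>lborel)"
          unfolding coef_def
          by (rule avg_bound) (use emeasure_cell[OF \<delta>, of k] measure_cell[OF \<delta>, of k] \<delta> gi gm p in auto)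
        then show ?thesis using True by (simp add: measure_cell[OF \<delta>] \<mu>_def G_def)
      qed
    qed
    also have "\<dots> = ennreal (1 / \<mu>) * (\<integral>\<^sup>+x. \<integral>\<^sup>+z. indicator (cell \<delta> k) x * indicator (cell \<delta> k) z * G x z \<partial>lborel \<partial>lborel)"
      by (rule nn_integral_cmult) measurable
    finally show ?thesis .
  qed
  have "(\<Sum>k\<in>KS. \<integral>\<^sup>+x. indicator (cell \<delta> k) x * ennreal (norm (W' x *v (g x - coef \<delta> g k)) powr p) \<partial>lborel)
      \<le> (\<Sum>k\<in>KS. ennreal (1 / \<mu>) * (\<integral>\<^sup>+x. \<integral>\<^sup>+z. indicator (cell \<delta> k) x * indicator (cell \<delta> k) z * G x z \<partial>lborel \<partial>lborel))"
    by (intro sum_mono s1)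
  also have "\<dots> = ennreal (1 / \<mu>) * (\<integral>\<^sup>+x. \<integral>\<^sup>+z. (\<Sum>k\<in>KS. indicator (cell \<delta> k) x * indicator (cell \<delta> k) z * G x z) \<partial>lborel \<partial>lborel)"
  proof -
    have "(\<Sum>k\<in>KS. (\<integral>\<^sup>+x. \<integral>\<^sup>+z. indicator (cell \<delta> k) x * indicator (cell \<delta> k) z * G x z \<partial>lborel \<partial>lborel))
        = (\<integral>\<^sup>+x. (\<Sum>k\<in>KS. \<integral>\<^sup>+z. indicator (cell \<delta> k) x * indicator (cell \<delta> k) z * G x z \<partial>lborel) \<partial>lborel)"
      by (rule nn_integral_sum[symmetric]) measurable
    also have "\<dots> = (\<integral>\<^sup>+x. \<integral>\<^sup>+z. (\<Sum>k\<in>KS. indicator (cell \<delta> k) x * indicator (cell \<delta> k) z * G x z) \<partial>lborel \<partial>lborel)"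
      by (intro nn_integral_cong nn_integral_sum[symmetric]) measurable
    finally have eq: "(\<Sum>k\<in>KS. (\<integral>\<^sup>+x. \<integral>\<^sup>+z. indicator (cell \<delta> k) x * indicator (cell \<delta> k) z * G x z \<partial>lborel \<partial>lborel))
        = (\<integral>\<^sup>+x. \<integral>\<^sup>+z. (\<Sum>k\<in>KS. indicator (cell \<delta> k) x * indicator (cell \<delta> k) z * G x z) \<partial>lborel \<partial>lborel)" .
    show ?thesis by (subst sum_distrib_left[symmetric]) (simp only: eq)
  qed
  also have "\<dots> \<le> ennreal (1 / \<mu>) * (\<integral>\<^sup>+x. \<integral>\<^sup>+z. indicator (Ybox \<delta>) (x - z) * G x z \<partial>lborel \<partial>lborel)"
  proof (intro mult_left_mono nn_integral_mono)
    fix x z :: "real^'n"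
    have "(\<Sum>k\<in>KS. indicator (cell \<delta> k) x * indicator (cell \<delta> k) z * G x z) = (\<Sum>k\<in>KS. indicator (cell \<delta> k) x * indicator (cell \<delta> k) z) * G x z"
      by (simp add: sum_distrib_right)
    also have "\<dots> \<le> indicator (Ybox \<delta>) (x - z) * G x z"
      by (intro mult_right_mono sum_ind_cells KS \<delta>) simp
    finally show "(\<Sum>k\<in>KS. indicator (cell \<delta> k) x * indicator (cell \<delta> k) z * G x z) \<le> indicator (Ybox \<delta>) (x - z) * G x z" .
  qed simp
  also have "(\<integral>\<^sup>+x. \<integral>\<^sup>+z. indicator (Ybox \<delta>) (x - z) * G x z \<partial>lborel \<partial>lborel)
      = (\<integral>\<^sup>+x. \<integral>\<^sup>+y. indicator (Ybox \<delta>) y * G x (x - y) \<partial>lborel \<partial>lborel)"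
  proof (rule nn_integral_cong)
    fix x :: "real^'n"
    show "(\<integral>\<^sup>+z. indicator (Ybox \<delta>) (x - z) * G x z \<partial>lborel) = (\<integral>\<^sup>+y. indicator (Ybox \<delta>) y * G x (x - y) \<partial>lborel)"
      by (subst nn_integral_reflect[where x=x]) (simp_all add: G_def)
  qed
  also have "\<dots> = (\<integral>\<^sup>+y. \<integral>\<^sup>+x. indicator (Ybox \<delta>) y * G x (x - y) \<partial>lborel \<partial>lborel)"
    by (rule lborel_pair.Fubini'[symmetric]) (simp add: G_def, measurable)
  also have "\<dots> = (\<integral>\<^sup>+y. indicator (Ybox \<delta>) y * Mf W' p (\<lambda>x. g (x - y) - g x) \<partial>lborel)"
  proof (rule nn_integral_cong)
    fix y :: "real^'n"
    have "(\<integral>\<^sup>+x. indicator (Ybox \<delta>) y * G x (x - y) \<partial>lborel) = indicator (Ybox \<delta>) y * (\<integral>\<^sup>+x. G x (x - y) \<partial>lborel)"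
      by (rule nn_integral_cmult) (simp add: G_def, measurable)
    also have "(\<integral>\<^sup>+x. G x (x - y) \<partial>lborel) = Mf W' p (\<lambda>x. g (x - y) - g x)"
      unfolding Mf_def G_def by (intro nn_integral_cong) (simp add: norm_minus_commute matrix_vector_mult_diff_distrib)
    finally show "(\<integral>\<^sup>+x. indicator (Ybox \<delta>) y * G x (x - y) \<partial>lborel) = indicator (Ybox \<delta>) y * Mf W' p (\<lambda>x. g (x - y) - g x)" .
  qed
  also have "\<dots> \<le> (\<integral>\<^sup>+y. ennreal Ebd * indicator (Ybox \<delta>) y \<partial>(lborel :: (real^'n) measure))"
    by (intro nn_integral_mono) (use Eb in \<open>auto simp: indicator_def\<close>)
  also have "\<dots> = ennreal Ebd * emeasure (lborel :: (real^'n) measure) (Ybox \<delta>)"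
    by (rule nn_integral_cmult_indicator) (rule Ybox_sets)
  also have "\<dots> = ennreal (Ebd * (2 * \<delta>) ^ CARD('n))"
    using emeasure_Ybox[OF \<delta>, where 'n='n] Ebd \<delta> by (simp add: ennreal_mult)
  finally have "(\<Sum>k\<in>KS. \<integral>\<^sup>+x. indicator (cell \<delta> k) x * ennreal (norm (W' x *v (g x - coef \<delta> g k)) powr p) \<partial>lborel)
      \<le> ennreal (1 / \<mu>) * ennreal (Ebd * (2 * \<delta>) ^ CARD('n))"
    by (simp add: mult_left_mono)
  also have "\<dots> = ennreal (2 ^ CARD('n) * Ebd)"
  proof -
    have r: "1 / \<mu> * (Ebd * (2 * \<delta>) ^ CARD('n)) = 2 ^ CARD('n) * Ebd"
      using \<delta> unfolding \<mu>_def by (simp add: power_mult_distrib)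
    have "ennreal (1 / \<mu>) * ennreal (Ebd * (2 * \<delta>) ^ CARD('n)) = ennreal (1 / \<mu> * (Ebd * (2 * \<delta>) ^ CARD('n)))"
      by (rule ennreal_mult[symmetric]) (use \<mu> Ebd \<delta> in auto)
    then show ?thesis by (simp only: r)
  qed
  finally show ?thesis .
qed


lemma norm_le_sum_vec: "norm (x::'a::real_normed_vector^'m) \<le> (\<Sum>i\<in>UNIV. norm (x$i))"
  by (simp add: norm_vec_def L2_set_le_sum)

definition Bmat :: "complex^'d^'d \<Rightarrow> real" where
  "Bmat A = (\<Sum>i\<in>UNIV. \<Sum>j\<in>UNIV. cmod (A$i$j))"

lemma mv_bound: "norm (A *v v) \<le> Bmat A * norm v"
proof -
  have "norm (A *v v) \<le> (\<Sum>i\<in>UNIV. norm ((A *v v)$i))" by (rule norm_le_sum_vec)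
  also have "\<dots> \<le> (\<Sum>i\<in>UNIV. \<Sum>j\<in>UNIV. cmod (A$i$j) * norm v)"
  proof (intro sum_mono)
    fix i
    have "norm ((A *v v)$i) = norm (\<Sum>j\<in>UNIV. A$i$j * v$j)" by (simp add: matrix_vector_mult_def)
    also have "\<dots> \<le> (\<Sum>j\<in>UNIV. norm (A$i$j * v$j))" by (rule norm_sum)
    also have "\<dots> \<le> (\<Sum>j\<in>UNIV. cmod (A$i$j) * norm v)"
    proof (intro sum_mono)
      fix j
      show "norm (A$i$j * v$j) \<le> cmod (A$i$j) * norm v"
        unfolding norm_mult by (intro mult_left_mono Finite_Cartesian_Product.norm_nth_le) simp
    qed
    finally show "norm ((A *v v)$i) \<le> (\<Sum>j\<in>UNIV. cmod (A$i$j) * norm v)" .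
  qed
  also have "\<dots> = Bmat A * norm v" by (simp add: Bmat_def sum_distrib_right)
  finally show ?thesis .
qed

lemma Bmat_nonneg: "Bmat A \<ge> 0"
  unfolding Bmat_def by (intro sum_nonneg) auto

lemma Bmat_meas[measurable (raw)]:
  fixes W :: "'a \<Rightarrow> complex^'d^'d"
  assumes "W \<in> borel_measurable M"
  shows "(\<lambda>x. Bmat (W x)) \<in> borel_measurable M"
  unfolding Bmat_def using assms by measurable

lemma norm_axis_complex: "norm (axis j (1::complex) :: complex^'d) = 1"
proof -
  have "axis j (1::complex) \<in> (Basis :: (complex^'d) set)"
    by (auto simp: Basis_vec_def Basis_complex_def)
  then show ?thesis by (rule norm_Basis)
qed

lemma entry_le_op_norm: "cmod (A$i$j) \<le> op_norm (A :: complex^'d^'d)"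
proof -
  have "(A *v axis j 1) $ i = A$i$j"
    by (simp add: matrix_vector_mult_def axis_def if_distrib cong: if_cong)
  then have "cmod (A$i$j) \<le> norm (A *v axis j 1)" using Finite_Cartesian_Product.norm_nth_le[of "A *v axis j 1" i] by simp
  also have "\<dots> \<le> onorm (\<lambda>v. A *v v) * norm (axis j (1::complex) :: complex^'d)"
    by (rule onorm) simp
  finally show ?thesis by (simp add: op_norm_def norm_axis_complex)
qed

lemma Bmat_le_op_norm: "Bmat A \<le> real (CARD('d) * CARD('d)) * op_norm (A :: complex^'d^'d)"
proof -
  have "Bmat A \<le> (\<Sum>i\<in>(UNIV::'d set). \<Sum>j\<in>(UNIV::'d set). op_norm A)"
    unfolding Bmat_def by (intro sum_mono entry_le_op_norm)
  then show ?thesis by simp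
qed

definition rnd :: "real \<Rightarrow> complex^'d \<Rightarrow> complex^'d" where
  "rnd \<eta> v = (\<chi> i. Complex (\<eta> * \<lfloor>Re (v$i) / \<eta>\<rfloor>) (\<eta> * \<lfloor>Im (v$i) / \<eta>\<rfloor>))"

lemma floor_approx:
  fixes t \<eta> :: real
  assumes "\<eta> > 0"
  shows "\<bar>t - \<eta> * \<lfloor>t / \<eta>\<rfloor>\<bar> \<le> \<eta>"
proof -
  have a: "real_of_int \<lfloor>t / \<eta>\<rfloor> \<le> t / \<eta>" and b: "t / \<eta> < real_of_int \<lfloor>t / \<eta>\<rfloor> + 1" by linarith+
  have "real_of_int \<lfloor>t / \<eta>\<rfloor> * \<eta> \<le> t" using mult_right_mono[OF a, of \<eta>] assms by simp
  moreover have "t < (real_of_int \<lfloor>t / \<eta>\<rfloor> + 1) * \<eta>" using mult_strict_right_mono[OF b assms] assms by simp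
  ultimately have "real_of_int \<lfloor>t / \<eta>\<rfloor> * \<eta> \<le> t" "t < (real_of_int \<lfloor>t / \<eta>\<rfloor> + 1) * \<eta>" by auto
  then have "\<eta> * \<lfloor>t / \<eta>\<rfloor> \<le> t" "t < \<eta> * \<lfloor>t / \<eta>\<rfloor> + \<eta>"
    by (simp_all add: algebra_simps)
  then show ?thesis by linarith
qed

lemma rnd_err:
  assumes "\<eta> > 0"
  shows "norm (v - rnd \<eta> (v :: complex^'d)) \<le> 2 * real CARD('d) * \<eta>"
proof -
  have "norm (v - rnd \<eta> v) \<le> (\<Sum>i\<in>UNIV. norm ((v - rnd \<eta> v)$i))" by (rule norm_le_sum_vec)
  also have "\<dots> \<le> (\<Sum>i\<in>(UNIV::'d set). 2 * \<eta>)"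
  proof (intro sum_mono)
    fix i
    have "norm ((v - rnd \<eta> v)$i) \<le> \<bar>Re ((v - rnd \<eta> v)$i)\<bar> + \<bar>Im ((v - rnd \<eta> v)$i)\<bar>" by (rule cmod_le)
    also have "\<dots> \<le> \<eta> + \<eta>"
      using floor_approx[OF assms, of "Re (v$i)"] floor_approx[OF assms, of "Im (v$i)"]
      by (simp add: rnd_def)
    finally show "norm ((v - rnd \<eta> v)$i) \<le> 2 * \<eta>" by simp
  qed
  also have "\<dots> = 2 * real CARD('d) * \<eta>" by simp
  finally show ?thesis .
qed

definition Lat :: "real \<Rightarrow> int \<Rightarrow> (complex^'d) set" where
  "Lat \<eta> M = (\<lambda>(a :: 'd \<Rightarrow> int, b :: 'd \<Rightarrow> int). \<chi> i. Complex (\<eta> * of_int (a i)) (\<eta> * of_int (b i))) ` ((PiE UNIV (\<lambda>_. {-M..M})) \<times> (PiE UNIV (\<lambda>_. {-M..M})))"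

lemma finite_Lat: "finite (Lat \<eta> M)"
  unfolding Lat_def by (intro finite_imageI finite_cartesian_product finite_PiE) auto

lemma floor_bound:
  fixes t \<eta> R :: real
  assumes "\<eta> > 0" "\<bar>t\<bar> \<le> R"
  shows "\<lfloor>t / \<eta>\<rfloor> \<in> {-\<lceil>R / \<eta>\<rceil>..\<lceil>R / \<eta>\<rceil>}"
proof -
  have "\<bar>t / \<eta>\<bar> \<le> R / \<eta>" using assms by (simp add: abs_divide divide_right_mono)
  then have a: "- (R / \<eta>) \<le> t / \<eta>" and b: "t / \<eta> \<le> R / \<eta>" by linarith+
  have "- \<lceil>R / \<eta>\<rceil> \<le> \<lfloor>t / \<eta>\<rfloor>" using floor_mono[OF a] by (simp add: ceiling_def)
  moreover have "real_of_int \<lfloor>t / \<eta>\<rfloor> \<le> real_of_int \<lceil>R / \<eta>\<rceil>"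
    using b of_int_floor_le[of "t / \<eta>"] le_of_int_ceiling[of "R / \<eta>"] by linarith
  then have "\<lfloor>t / \<eta>\<rfloor> \<le> \<lceil>R / \<eta>\<rceil>" by linarith
  ultimately show ?thesis by simp
qed

lemma rnd_Lat:
  assumes "\<eta> > 0" "norm v \<le> R"
  shows "rnd \<eta> (v :: complex^'d) \<in> Lat \<eta> \<lceil>R / \<eta>\<rceil>"
proof -
  define a where "a i = \<lfloor>Re (v$i) / \<eta>\<rfloor>" for i
  define b where "b i = \<lfloor>Im (v$i) / \<eta>\<rfloor>" for i
  have "\<bar>Re (v$i)\<bar> \<le> R" "\<bar>Im (v$i)\<bar> \<le> R" for i
    using abs_Re_le_cmod[of "v$i"] abs_Im_le_cmod[of "v$i"] Finite_Cartesian_Product.norm_nth_le[of v i] assms(2) by linarith+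
  then have "a \<in> PiE UNIV (\<lambda>_. {-\<lceil>R / \<eta>\<rceil>..\<lceil>R / \<eta>\<rceil>})" "b \<in> PiE UNIV (\<lambda>_. {-\<lceil>R / \<eta>\<rceil>..\<lceil>R / \<eta>\<rceil>})"
    using floor_bound[OF assms(1)] by (auto simp: a_def b_def PiE_UNIV_domain)
  moreover have "rnd \<eta> v = (\<lambda>(a :: 'd \<Rightarrow> int, b :: 'd \<Rightarrow> int). \<chi> i. Complex (\<eta> * of_int (a i)) (\<eta> * of_int (b i))) (a, b)"
    by (simp add: rnd_def a_def b_def)
  ultimately show ?thesis unfolding Lat_def by blast
qed

lemma AE_translate:
  fixes f g :: "real^'n \<Rightarrow> 'b"
  assumes "AE x in lborel. f x = g x"
  shows "AE x in lborel. f (x - y) = g (x - y)"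
proof -
  from assms obtain N where N: "{x \<in> space lborel. \<not> f x = g x} \<subseteq> N" "emeasure lborel N = 0" "N \<in> sets lborel"
    by (auto elim!: AE_E)
  then have "N \<in> null_sets lborel" by auto
  then have "{x. x - y \<in> N} \<in> null_sets lborel" by (rule null_sets_translation)
  then have "AE x in lborel. x \<notin> {x. x - y \<in> N}" by (rule AE_not_in)
  then show ?thesis by eventually_elim (use N in auto)
qed

lemma powr3_le:
  fixes s a b c p :: real
  assumes "0 \<le> s" "s \<le> a + b + c" "a \<ge> 0" "b \<ge> 0" "c \<ge> 0" "p > 0"
  shows "ennreal (s powr p) \<le> ennreal (3 powr p) * (ennreal (a powr p) + ennreal (b powr p) + ennreal (c powr p))"
proof -
  have "s powr p \<le> (3 * max a (max b c)) powr p" using assms by (intro powr_mono2) auto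
  also have "\<dots> = 3 powr p * max a (max b c) powr p" using assms by (simp add: powr_mult)
  also have "max a (max b c) powr p \<le> a powr p + b powr p + c powr p"
    using assms by (auto simp: max_def)
  then have "3 powr p * max a (max b c) powr p \<le> 3 powr p * (a powr p + b powr p + c powr p)"
    by (simp add: mult_left_mono)
  finally have "ennreal (s powr p) \<le> ennreal (3 powr p * (a powr p + b powr p + c powr p))" by (rule ennreal_leI)
  also have "\<dots> = ennreal (3 powr p) * (ennreal (a powr p) + ennreal (b powr p) + ennreal (c powr p))"
    by (simp add: ennreal_mult ennreal_plus)
  finally show ?thesis .
qed


lemma sum_cells_collapse:
  fixes F :: "('n::finite \<Rightarrow> int) \<Rightarrow> 'a::{real_vector}"
  assumes "finite KS"
  shows "(\<Sum>k\<in>KS. indicator (cell \<delta> k) x *\<^sub>R F k) = (if key \<delta> x \<in> KS then F (key \<delta> x) else 0)"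
proof -
  have "(\<Sum>k\<in>KS. indicator (cell \<delta> k) x *\<^sub>R F k) = (\<Sum>k\<in>KS. if key \<delta> x = k then F k else 0)"
    by (intro sum.cong refl) (simp add: indicator_def mem_cell_key)
  also have "\<dots> = (if key \<delta> x \<in> KS then F (key \<delta> x) else 0)"
    using assms by (simp add: sum.delta)
  finally show ?thesis .
qed

lemma sum_cells_collapse_enn:
  fixes F :: "('n::finite \<Rightarrow> int) \<Rightarrow> ennreal"
  assumes "finite KS"
  shows "(\<Sum>k\<in>KS. indicator (cell \<delta> k) x * F k) = (if key \<delta> x \<in> KS then F (key \<delta> x) else 0)"
proof -
  have "(\<Sum>k\<in>KS. indicator (cell \<delta> k) x * F k) = (\<Sum>k\<in>KS. if key \<delta> x = k then F k else 0)"
    by (intro sum.cong refl) (simp add: indicator_def mem_cell_key)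
  also have "\<dots> = (if key \<delta> x \<in> KS then F (key \<delta> x) else 0)"
    using assms by (simp add: sum.delta)
  finally show ?thesis .
qed

lemma ball_in_cells:
  fixes x :: "real^'n"
  assumes "\<delta> > 0" "x \<in> ball 0 R"
  shows "key \<delta> x \<in> PiE UNIV (\<lambda>_. {-\<lceil>R / \<delta>\<rceil>..<\<lceil>R / \<delta>\<rceil>})"
proof -
  have "key \<delta> x i \<in> {-\<lceil>R / \<delta>\<rceil>..<\<lceil>R / \<delta>\<rceil>}" for i
  proof -
    have "\<bar>x $ i\<bar> < R" using component_le_norm_cart[of x i] assms(2) by simp
    then have "\<bar>x $ i / \<delta>\<bar> < R / \<delta>" using assms(1) by (simp add: abs_divide divide_strict_right_mono)
    then have a: "- (R / \<delta>) < x $ i / \<delta>" and b: "x $ i / \<delta> < R / \<delta>" by linarith+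
    have "- \<lceil>R / \<delta>\<rceil> \<le> \<lfloor>x $ i / \<delta>\<rfloor>" using floor_mono[of "- (R / \<delta>)" "x $ i / \<delta>"] a by (simp add: ceiling_def)
    moreover have "real_of_int \<lfloor>x $ i / \<delta>\<rfloor> < real_of_int \<lceil>R / \<delta>\<rceil>"
      using b of_int_floor_le[of "x $ i / \<delta>"] le_of_int_ceiling[of "R / \<delta>"] by linarith
    then have "\<lfloor>x $ i / \<delta>\<rfloor> < \<lceil>R / \<delta>\<rceil>" by linarith
    ultimately show ?thesis by (simp add: key_def)
  qed
  then show ?thesis by (auto simp: PiE_UNIV_domain)
qed

lemma cells_in_cbox:
  fixes x :: "real^'n"
  assumes "\<delta> > 0" "k \<in> PiE UNIV (\<lambda>_. {-N..<N})" "x \<in> cell \<delta> k"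
  shows "x \<in> cbox (- ((\<delta> * N) *\<^sub>R 1)) ((\<delta> * N) *\<^sub>R 1)"
  unfolding mem_box_cart
proof
  fix i
  have k: "-N \<le> k i" "k i < N" using assms(2) by (auto simp: PiE_UNIV_domain)
  have x: "\<delta> * k i \<le> x$i" "x$i < \<delta> * (k i + 1)" using assms(1,3) by (auto simp: mem_cell)
  have "\<delta> * (- N) \<le> \<delta> * k i" using k assms(1) by (intro mult_left_mono) auto
  moreover have "\<delta> * (k i + 1) \<le> \<delta> * N" using k assms(1) by (intro mult_left_mono) auto
  ultimately show "(- ((\<delta> * N) *\<^sub>R 1)) $ i \<le> x $ i \<and> x $ i \<le> ((\<delta> * N) *\<^sub>R (1::real^'n)) $ i"
    using x by simp
qed

lemma Mf_AE:
  assumes "AE x in lborel. f x = g x"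
  shows "Mf W p f = Mf W p g"
  unfolding Mf_def using assms by (intro nn_integral_cong_AE) auto

lemma cell_vec_bound:
  fixes W' :: "real^'n \<Rightarrow> complex^'d^'d"
  assumes Wm: "W' \<in> borel_measurable lborel" and \<delta>: "\<delta> > 0" and k: "k \<in> PiE UNIV (\<lambda>_. {-N..<N})" and p: "p > 0"
  shows "(\<integral>\<^sup>+x. indicator (cell \<delta> k) x * ennreal (norm (W' x *v v) powr p) \<partial>lborel)
     \<le> ennreal (norm v powr p) * (\<integral>\<^sup>+x. indicator (cbox (- ((\<delta> * N) *\<^sub>R 1)) ((\<delta> * N) *\<^sub>R 1)) x * ennreal (Bmat (W' x) powr p) \<partial>lborel)"
proof -
  note [measurable] = Wm
  have "(\<integral>\<^sup>+x. indicator (cell \<delta> k) x * ennreal (norm (W' x *v v) powr p) \<partial>lborel)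
     \<le> (\<integral>\<^sup>+x. ennreal (norm v powr p) * (indicator (cbox (- ((\<delta> * N) *\<^sub>R 1)) ((\<delta> * N) *\<^sub>R 1)) x * ennreal (Bmat (W' x) powr p)) \<partial>lborel)"
  proof (intro nn_integral_mono)
    fix x
    show "indicator (cell \<delta> k) x * ennreal (norm (W' x *v v) powr p)
      \<le> ennreal (norm v powr p) * (indicator (cbox (- ((\<delta> * N) *\<^sub>R 1)) ((\<delta> * N) *\<^sub>R 1)) x * ennreal (Bmat (W' x) powr p))"
    proof (cases "x \<in> cell \<delta> k")
      case False then show ?thesis by simp
    next
      case True
      then have xin: "x \<in> cbox (- ((\<delta> * N) *\<^sub>R 1)) ((\<delta> * N) *\<^sub>R 1)" by (rule cells_in_cbox[OF \<delta> k])
      have "norm (W' x *v v) powr p \<le> (Bmat (W' x) * norm v) powr p"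
        using p by (intro powr_mono2 mv_bound) auto
      also have "\<dots> = norm v powr p * Bmat (W' x) powr p"
        using Bmat_nonneg by (simp add: powr_mult)
      finally have "ennreal (norm (W' x *v v) powr p) \<le> ennreal (norm v powr p) * ennreal (Bmat (W' x) powr p)"
        by (simp add: ennreal_mult[symmetric] ennreal_leI)
      then show ?thesis using True xin by simp
    qed
  qed
  also have "\<dots> = ennreal (norm v powr p) * (\<integral>\<^sup>+x. indicator (cbox (- ((\<delta> * N) *\<^sub>R 1)) ((\<delta> * N) *\<^sub>R 1)) x * ennreal (Bmat (W' x) powr p) \<partial>lborel)"
    by (rule nn_integral_cmult) measurable
  finally show ?thesis .
qed


lemma approx_err:
  fixes W' :: "real^'n \<Rightarrow> complex^'d^'d" and g :: "real^'n \<Rightarrow> complex^'d"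
  assumes Wm: "W' \<in> borel_measurable lborel" and p: "p \<ge> 1" and \<delta>: "\<delta> > 0"
    and KS: "KS = PiE UNIV (\<lambda>_. {-\<lceil>R / \<delta>\<rceil>..<\<lceil>R / \<delta>\<rceil>})"
    and gm: "g \<in> borel_measurable lborel"
    and T1: "(\<Sum>k\<in>KS. \<integral>\<^sup>+x. indicator (cell \<delta> k) x * ennreal (norm (W' x *v (g x - coef \<delta> g k)) powr p) \<partial>lborel) \<le> ennreal s1"
    and gR: "Mf W' p (\<lambda>x. indicator (- ball 0 R) x *\<^sub>R g x) \<le> ennreal s3"
    and \<eta>: "\<eta> > 0"
  shows "Mf W' p (\<lambda>x. g x - (\<Sum>k\<in>KS. indicator (cell \<delta> k) x *\<^sub>R rnd \<eta> (coef \<delta> g k)))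
    \<le> ennreal (3 powr p) * (ennreal s1 + of_nat (card KS) * (ennreal ((2 * real CARD('d) * \<eta>) powr p) *
          (\<integral>\<^sup>+x. indicator (cbox (- ((\<delta> * \<lceil>R / \<delta>\<rceil>) *\<^sub>R 1)) ((\<delta> * \<lceil>R / \<delta>\<rceil>) *\<^sub>R 1)) x * ennreal (Bmat (W' x) powr p) \<partial>lborel)) + ennreal s3)"
proof -
  note [measurable] = Wm gm
  have fin: "finite KS" unfolding KS by (intro finite_PiE) auto
  define c where "c k = coef \<delta> g k" for k
  define IBL where "IBL = (\<integral>\<^sup>+x. indicator (cbox (- ((\<delta> * \<lceil>R / \<delta>\<rceil>) *\<^sub>R 1)) ((\<delta> * \<lceil>R / \<delta>\<rceil>) *\<^sub>R (1::real^'n))) x * ennreal (Bmat (W' x) powr p) \<partial>lborel)"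
  define A1 where "A1 x = (\<Sum>k\<in>KS. indicator (cell \<delta> k) x * ennreal (norm (W' x *v (g x - c k)) powr p))" for x
  define A2 where "A2 x = (\<Sum>k\<in>KS. indicator (cell \<delta> k) x * ennreal (norm (W' x *v (c k - rnd \<eta> (c k))) powr p))" for x
  define A3 where "A3 x = ennreal (norm (W' x *v (indicator (- ball 0 R) x *\<^sub>R g x)) powr p)" for x
  have pw: "ennreal (norm (W' x *v (g x - (\<Sum>k\<in>KS. indicator (cell \<delta> k) x *\<^sub>R rnd \<eta> (c k)))) powr p)
      \<le> ennreal (3 powr p) * (A1 x + A2 x + A3 x)" for x
  proof (cases "key \<delta> x \<in> KS")
    case True
    define k0 where "k0 = key \<delta> x"
    have G: "(\<Sum>k\<in>KS. indicator (cell \<delta> k) x *\<^sub>R rnd \<eta> (c k)) = rnd \<eta> (c k0)"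
      using True by (simp add: sum_cells_collapse[OF fin] k0_def)
    have a1: "A1 x = ennreal (norm (W' x *v (g x - c k0)) powr p)"
      unfolding A1_def using True by (simp add: sum_cells_collapse_enn[OF fin] k0_def)
    have a2: "A2 x = ennreal (norm (W' x *v (c k0 - rnd \<eta> (c k0))) powr p)"
      unfolding A2_def using True by (simp add: sum_cells_collapse_enn[OF fin] k0_def)
    have "norm (W' x *v (g x - rnd \<eta> (c k0))) \<le> norm (W' x *v (g x - c k0)) + norm (W' x *v (c k0 - rnd \<eta> (c k0))) + norm (W' x *v (indicator (- ball 0 R) x *\<^sub>R g x))"
    proof -
      have "W' x *v (g x - rnd \<eta> (c k0)) = W' x *v (g x - c k0) + W' x *v (c k0 - rnd \<eta> (c k0))"
        by (simp add: matrix_vector_right_distrib[symmetric])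
      then have "norm (W' x *v (g x - rnd \<eta> (c k0))) \<le> norm (W' x *v (g x - c k0)) + norm (W' x *v (c k0 - rnd \<eta> (c k0)))"
        by (simp add: norm_triangle_ineq)
      then show ?thesis by (smt (verit) norm_ge_zero)
    qed
    then show ?thesis unfolding G a1 a2 A3_def using p by (intro powr3_le) auto
  next
    case False
    then have "x \<notin> ball 0 R" using ball_in_cells[OF \<delta>, of x R] KS by blast
    then have eq: "g x - (\<Sum>k\<in>KS. indicator (cell \<delta> k) x *\<^sub>R rnd \<eta> (c k)) = indicator (- ball 0 R) x *\<^sub>R g x"
      using False by (simp add: sum_cells_collapse[OF fin])
    have a12: "A1 x = 0" "A2 x = 0"
      unfolding A1_def A2_def using False by (simp_all add: sum_cells_collapse_enn[OF fin])
    have one: "ennreal 1 \<le> ennreal (3 powr p)" using p by (intro ennreal_leI ge_one_powr_ge_zero) auto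
    have "A3 x \<le> ennreal (3 powr p) * A3 x" using mult_right_mono[OF one, of "A3 x"] by simp
    then show ?thesis unfolding eq a12 by (simp add: A3_def)
  qed
  have m1: "A1 \<in> borel_measurable lborel" unfolding A1_def c_def by measurable
  have m2: "A2 \<in> borel_measurable lborel" unfolding A2_def c_def by measurable
  have m3: "A3 \<in> borel_measurable lborel" unfolding A3_def by measurable
  have "Mf W' p (\<lambda>x. g x - (\<Sum>k\<in>KS. indicator (cell \<delta> k) x *\<^sub>R rnd \<eta> (coef \<delta> g k)))
      \<le> (\<integral>\<^sup>+x. ennreal (3 powr p) * (A1 x + A2 x + A3 x) \<partial>lborel)"
    unfolding Mf_def c_def[symmetric] by (intro nn_integral_mono pw)
  also have "\<dots> = ennreal (3 powr p) * (integral\<^sup>N lborel A1 + integral\<^sup>N lborel A2 + integral\<^sup>N lborel A3)"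
    using m1 m2 m3 by (simp add: nn_integral_cmult nn_integral_add)
  also have "integral\<^sup>N lborel A1 \<le> ennreal s1"
  proof -
    have "integral\<^sup>N lborel A1 = (\<Sum>k\<in>KS. \<integral>\<^sup>+x. indicator (cell \<delta> k) x * ennreal (norm (W' x *v (g x - coef \<delta> g k)) powr p) \<partial>lborel)"
      unfolding A1_def c_def by (rule nn_integral_sum) measurable
    then show ?thesis using T1 by simp
  qed
  also have "integral\<^sup>N lborel A2 \<le> of_nat (card KS) * (ennreal ((2 * real CARD('d) * \<eta>) powr p) * IBL)"
  proof -
    have "integral\<^sup>N lborel A2 = (\<Sum>k\<in>KS. \<integral>\<^sup>+x. indicator (cell \<delta> k) x * ennreal (norm (W' x *v (c k - rnd \<eta> (c k))) powr p) \<partial>lborel)"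
      unfolding A2_def c_def by (rule nn_integral_sum) measurable
    also have "\<dots> \<le> (\<Sum>k\<in>KS. ennreal ((2 * real CARD('d) * \<eta>) powr p) * IBL)"
    proof (intro sum_mono)
      fix k assume k: "k \<in> KS"
      have "(\<integral>\<^sup>+x. indicator (cell \<delta> k) x * ennreal (norm (W' x *v (c k - rnd \<eta> (c k))) powr p) \<partial>lborel)
          \<le> ennreal (norm (c k - rnd \<eta> (c k)) powr p) * IBL"
        unfolding IBL_def using k KS p by (intro cell_vec_bound[OF Wm \<delta>]) auto
      also have "\<dots> \<le> ennreal ((2 * real CARD('d) * \<eta>) powr p) * IBL"
        using rnd_err[OF \<eta>, of "c k"] p by (intro mult_right_mono ennreal_leI powr_mono2) auto
      finally show "(\<integral>\<^sup>+x. indicator (cell \<delta> k) x * ennreal (norm (W' x *v (c k - rnd \<eta> (c k))) powr p) \<partial>lborel)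
          \<le> ennreal ((2 * real CARD('d) * \<eta>) powr p) * IBL" .
    qed
    also have "\<dots> = of_nat (card KS) * (ennreal ((2 * real CARD('d) * \<eta>) powr p) * IBL)" by simp
    finally show ?thesis .
  qed
  also have "integral\<^sup>N lborel A3 \<le> ennreal s3" using gR unfolding A3_def Mf_def by simp
  finally show ?thesis unfolding IBL_def by (simp add: add_mono mult_left_mono)
qed

lemma coef_bound:
  fixes W' :: "real^'n \<Rightarrow> complex^'d^'d" and g :: "real^'n \<Rightarrow> complex^'d"
  assumes Wm: "W' \<in> borel_measurable lborel" and p: "p \<ge> 1"
    and fin: "finite KS" and k: "k \<in> KS"
    and gm: "g \<in> borel_measurable lborel"
    and gB: "Mf W' p g \<le> ennreal B" and B: "B \<ge> 0" and s1: "s1 \<ge> 0"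
    and T1: "(\<Sum>k\<in>KS. \<integral>\<^sup>+x. indicator (cell \<delta> k) x * ennreal (norm (W' x *v (g x - coef \<delta> g k)) powr p) \<partial>lborel) \<le> ennreal s1"
    and \<alpha>: "\<alpha> > 0" "\<forall>v. ennreal (\<alpha> * norm v powr p) \<le> (\<integral>\<^sup>+x. indicator (cell \<delta> k) x * ennreal (norm (W' x *v v) powr p) \<partial>lborel)"
  shows "norm (coef \<delta> g k) \<le> ((2 powr p * (B + s1)) / \<alpha>) powr (1 / p)"
proof -
  note [measurable] = Wm gm
  define c where "c = coef \<delta> g k"
  have "ennreal (\<alpha> * norm c powr p) \<le> (\<integral>\<^sup>+x. indicator (cell \<delta> k) x * ennreal (norm (W' x *v c) powr p) \<partial>lborel)"
    using \<alpha> by blast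
  also have "\<dots> \<le> (\<integral>\<^sup>+x. ennreal (2 powr p) * (indicator (cell \<delta> k) x * ennreal (norm (W' x *v g x) powr p)
        + indicator (cell \<delta> k) x * ennreal (norm (W' x *v (g x - c)) powr p)) \<partial>lborel)"
  proof (intro nn_integral_mono)
    fix x
    have "norm (W' x *v c) \<le> norm (W' x *v g x) + norm (W' x *v (g x - c))"
    proof -
      have "W' x *v c = W' x *v g x - W' x *v (g x - c)" by (simp add: matrix_vector_mult_diff_distrib)
      then show ?thesis by (metis norm_triangle_ineq4)
    qed
    then have "ennreal (norm (W' x *v c) powr p) \<le> ennreal (2 powr p) * (ennreal (norm (W' x *v g x) powr p) + ennreal (norm (W' x *v (g x - c)) powr p))"
      using p by (intro ennreal_powr_sum_le) auto
    then show "indicator (cell \<delta> k) x * ennreal (norm (W' x *v c) powr p) \<le> ennreal (2 powr p) * (indicator (cell \<delta> k) x * ennreal (norm (W' x *v g x) powr p)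
        + indicator (cell \<delta> k) x * ennreal (norm (W' x *v (g x - c)) powr p))"
      by (cases "x \<in> cell \<delta> k") auto
  qed
  also have "\<dots> = ennreal (2 powr p) * ((\<integral>\<^sup>+x. indicator (cell \<delta> k) x * ennreal (norm (W' x *v g x) powr p) \<partial>lborel)
        + (\<integral>\<^sup>+x. indicator (cell \<delta> k) x * ennreal (norm (W' x *v (g x - c)) powr p) \<partial>lborel))"
    by (subst nn_integral_cmult) (measurable, subst nn_integral_add, measurable)
  also have "\<dots> \<le> ennreal (2 powr p) * (ennreal B + ennreal s1)"
  proof (intro mult_left_mono add_mono)
    have "(\<integral>\<^sup>+x. indicator (cell \<delta> k) x * ennreal (norm (W' x *v g x) powr p) \<partial>lborel) \<le> Mf W' p g"
      unfolding Mf_def by (intro nn_integral_mono) (simp add: indicator_def)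
    then show "(\<integral>\<^sup>+x. indicator (cell \<delta> k) x * ennreal (norm (W' x *v g x) powr p) \<partial>lborel) \<le> ennreal B"
      using gB by simp
    have "(\<integral>\<^sup>+x. indicator (cell \<delta> k) x * ennreal (norm (W' x *v (g x - c)) powr p) \<partial>lborel)
        \<le> (\<Sum>k\<in>KS. \<integral>\<^sup>+x. indicator (cell \<delta> k) x * ennreal (norm (W' x *v (g x - coef \<delta> g k)) powr p) \<partial>lborel)"
      unfolding c_def by (rule member_le_sum[OF k _ fin]) simp
    then show "(\<integral>\<^sup>+x. indicator (cell \<delta> k) x * ennreal (norm (W' x *v (g x - c)) powr p) \<partial>lborel) \<le> ennreal s1"
      using T1 by simp
  qed simp
  also have "\<dots> = ennreal (2 powr p * (B + s1))" using B s1 by (simp add: ennreal_mult ennreal_plus)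
  finally have "\<alpha> * norm c powr p \<le> 2 powr p * (B + s1)"
    using B s1 by (subst (asm) ennreal_le_iff) auto
  then have le: "norm c powr p \<le> (2 powr p * (B + s1)) / \<alpha>" using \<alpha> by (simp add: pos_le_divide_eq mult.commute)
  have "norm c = (norm c powr p) powr (1 / p)" using p by (simp add: powr_powr)
  also have "\<dots> \<le> ((2 powr p * (B + s1)) / \<alpha>) powr (1 / p)" using le p by (intro powr_mono2) auto
  finally show ?thesis unfolding c_def .
qed


theorem net_exists:
  fixes W' :: "real^'n \<Rightarrow> complex^'d^'d" and F :: "(real^'n \<Rightarrow> complex^'d) set"
  assumes Wm: "W' \<in> borel_measurable lborel"
    and inv: "AE x in lborel. \<forall>v. v \<noteq> 0 \<longrightarrow> W' x *v v \<noteq> 0"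
    and p: "p \<ge> 1"
    and IB: "\<And>L. (\<integral>\<^sup>+x. indicator (cbox (- (L *\<^sub>R 1)) (L *\<^sub>R 1)) x * ennreal (Bmat (W' x) powr p) \<partial>lborel) < \<infinity>"
    and Fm: "\<And>f. f \<in> F \<Longrightarrow> f \<in> borel_measurable lebesgue"
    and a: "\<And>f. f \<in> F \<Longrightarrow> Mf W' p f \<le> ennreal B" and B: "B \<ge> 0"
    and b: "\<And>t. t > 0 \<Longrightarrow> \<exists>R>0. \<forall>f\<in>F. Mf W' p (\<lambda>x. indicator (- ball 0 R) x *\<^sub>R f x) \<le> ennreal t"
    and c: "\<And>t. t > 0 \<Longrightarrow> \<exists>r>0. \<forall>f\<in>F. \<forall>y\<in>ball 0 r. Mf W' p (\<lambda>x. f (x - y) - f x) \<le> ennreal t"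
    and t: "t > 0"
  shows "\<exists>K. finite K \<and> (\<forall>G\<in>K. G \<in> borel_measurable lborel \<and> Mf W' p G < \<infinity>) \<and>
    (\<forall>f\<in>F. \<exists>G\<in>K. Mf W' p (\<lambda>x. f x - G x) \<le> ennreal t)"
proof -
  note [measurable] = Wm
  define s where "s = t / (3 * 3 powr p)"
  have s: "s > 0" using t by (simp add: s_def)
  obtain R where R: "R > 0" "\<forall>f\<in>F. Mf W' p (\<lambda>x. indicator (- ball 0 R) x *\<^sub>R f x) \<le> ennreal s"
    using b[OF s] by blast
  define Ebd where "Ebd = s / 2 ^ CARD('n)"
  have Ebd: "Ebd > 0" using s by (simp add: Ebd_def)
  have Ebds: "2 ^ CARD('n) * Ebd = s" by (simp add: Ebd_def)
  obtain r where r: "r > 0" "\<forall>f\<in>F. \<forall>y\<in>ball 0 r. Mf W' p (\<lambda>x. f (x - y) - f x) \<le> ennreal Ebd"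
    using c[OF Ebd] by blast
  define \<delta> where "\<delta> = r / real CARD('n)"
  have \<delta>: "\<delta> > 0" using r by (simp add: \<delta>_def)
  have Ysub: "Ybox \<delta> \<subseteq> ball (0::real^'n) r"
  proof
    fix y :: "real^'n" assume "y \<in> Ybox \<delta>"
    then have "norm y < real CARD('n) * \<delta>" by (rule Ybox_norm)
    then show "y \<in> ball 0 r" by (simp add: \<delta>_def)
  qed
  define N where "N = \<lceil>R / \<delta>\<rceil>"
  define KS :: "('n \<Rightarrow> int) set" where "KS = PiE UNIV (\<lambda>_. {-N..<N})"
  have finKS: "finite KS" unfolding KS_def by (intro finite_PiE) auto
  have N1: "N \<ge> 1"
  proof -
    have "0 < R / \<delta>" using R \<delta> by simp
    then have "0 < real_of_int N" using le_of_int_ceiling[of "R / \<delta>"] by (simp add: N_def)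
    then show ?thesis by simp
  qed
  have KSne: "KS \<noteq> {}"
  proof -
    have "(\<lambda>_. 0) \<in> KS" using N1 by (auto simp: KS_def PiE_UNIV_domain)
    then show ?thesis by blast
  qed
  have cardKS: "card KS > 0" using finKS KSne by (simp add: card_gt_0_iff)
  define IBL where "IBL = (\<integral>\<^sup>+x. indicator (cbox (- ((\<delta> * N) *\<^sub>R 1)) ((\<delta> * N) *\<^sub>R 1)) x * ennreal (Bmat (W' x) powr p) \<partial>(lborel :: (real^'n) measure))"
  have IBL: "IBL < \<infinity>" unfolding IBL_def by (rule IB)
  define IBr where "IBr = enn2real IBL"
  have IBr: "IBL = ennreal IBr" "IBr \<ge> 0" using IBL by (auto simp: IBr_def)
  define \<eta>e where "\<eta>e = (s / (real (card KS) * (IBr + 1))) powr (1 / p)"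
  have qpos: "s / (real (card KS) * (IBr + 1)) > 0" using s cardKS IBr by (intro divide_pos_pos mult_pos_pos) auto
  have \<eta>e: "\<eta>e > 0" using qpos s cardKS IBr unfolding \<eta>e_def by simp
  have \<eta>ep: "\<eta>e powr p = s / (real (card KS) * (IBr + 1))"
    unfolding \<eta>e_def powr_powr using p qpos s IBr by simp
  define \<eta> where "\<eta> = \<eta>e / (2 * real CARD('d))"
  have \<eta>: "\<eta> > 0" using \<eta>e by (simp add: \<eta>_def)
  have \<eta>2: "2 * real CARD('d) * \<eta> = \<eta>e" by (simp add: \<eta>_def)
  have "\<forall>k. \<exists>\<alpha>>0. \<forall>v. ennreal (\<alpha> * norm v powr p) \<le> (\<integral>\<^sup>+x. indicator (cell \<delta> k) x * ennreal (norm (W' x *v v) powr p) \<partial>lborel)"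
  proof
    fix k :: "'n \<Rightarrow> int"
    show "\<exists>\<alpha>>0. \<forall>v. ennreal (\<alpha> * norm v powr p) \<le> (\<integral>\<^sup>+x. indicator (cell \<delta> k) x * ennreal (norm (W' x *v v) powr p) \<partial>lborel)"
      by (rule pos_lower[OF Wm inv cell_sets]) (use emeasure_cell[OF \<delta>, of k] \<delta> p in auto)
  qed
  from choice[OF this] obtain \<alpha>f where \<alpha>fall: "\<forall>k. \<alpha>f k > 0 \<and> (\<forall>v. ennreal (\<alpha>f k * norm v powr p) \<le> (\<integral>\<^sup>+x. indicator (cell \<delta> k) x * ennreal (norm (W' x *v v) powr p) \<partial>lborel))"
    by blast
  have \<alpha>f: "\<And>k. \<alpha>f k > 0"
    "\<And>k v. ennreal (\<alpha>f k * norm v powr p) \<le> (\<integral>\<^sup>+x. indicator (cell \<delta> k) x * ennreal (norm (W' x *v v) powr p) \<partial>lborel)"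
    using \<alpha>fall by blast+
  define \<alpha>0 where "\<alpha>0 = Min (\<alpha>f ` KS)"
  have \<alpha>0: "\<alpha>0 > 0" using finKS KSne \<alpha>f(1) by (simp add: \<alpha>0_def)
  have \<alpha>0le: "\<alpha>0 \<le> \<alpha>f k" if "k \<in> KS" for k using finKS that by (simp add: \<alpha>0_def)
  have h\<alpha>0: "\<forall>v. ennreal (\<alpha>0 * norm v powr p) \<le> (\<integral>\<^sup>+x. indicator (cell \<delta> k) x * ennreal (norm (W' x *v v) powr p) \<partial>lborel)"
    if "k \<in> KS" for k
  proof
    fix v :: "complex^'d"
    have "ennreal (\<alpha>0 * norm v powr p) \<le> ennreal (\<alpha>f k * norm v powr p)"
      using \<alpha>0le[OF that] by (intro ennreal_leI mult_right_mono) auto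
    also have "\<dots> \<le> (\<integral>\<^sup>+x. indicator (cell \<delta> k) x * ennreal (norm (W' x *v v) powr p) \<partial>lborel)"
      by (rule \<alpha>f(2))
    finally show "ennreal (\<alpha>0 * norm v powr p) \<le> (\<integral>\<^sup>+x. indicator (cell \<delta> k) x * ennreal (norm (W' x *v v) powr p) \<partial>lborel)" .
  qed
  define Rc where "Rc = ((2 powr p * (B + s)) / \<alpha>0) powr (1 / p)"
  define M where "M = \<lceil>Rc / \<eta>\<rceil>"
  define netf where "netf \<phi> = (\<lambda>x. \<Sum>k\<in>KS. indicator (cell \<delta> k) x *\<^sub>R \<phi> k)" for \<phi> :: "('n \<Rightarrow> int) \<Rightarrow> complex^'d"
  define K where "K = netf ` (PiE KS (\<lambda>_. Lat \<eta> M))"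
  show ?thesis
  proof (intro exI conjI ballI)
    show "finite K" unfolding K_def by (intro finite_imageI finite_PiE finKS finite_Lat)
  next
    fix G assume "G \<in> K"
    then obtain \<phi> where G: "G = netf \<phi>" by (auto simp: K_def)
    show "G \<in> borel_measurable lborel" unfolding G netf_def by measurable
    show "Mf W' p G < \<infinity>"
    proof -
      have pw: "ennreal (norm (W' x *v G x) powr p) = (\<Sum>k\<in>KS. indicator (cell \<delta> k) x * ennreal (norm (W' x *v \<phi> k) powr p))" for x
      proof (cases "key \<delta> x \<in> KS")
        case True then show ?thesis unfolding G netf_def by (simp add: sum_cells_collapse[OF finKS] sum_cells_collapse_enn[OF finKS])
      next
        case False then show ?thesis unfolding G netf_def using p by (simp add: sum_cells_collapse[OF finKS] sum_cells_collapse_enn[OF finKS])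
      qed
      have "Mf W' p G = (\<Sum>k\<in>KS. \<integral>\<^sup>+x. indicator (cell \<delta> k) x * ennreal (norm (W' x *v \<phi> k) powr p) \<partial>lborel)"
        unfolding Mf_def pw by (rule nn_integral_sum) measurable
      also have "\<dots> \<le> (\<Sum>k\<in>KS. ennreal (norm (\<phi> k) powr p) * IBL)"
      proof (intro sum_mono)
        fix k assume "k \<in> KS"
        then show "(\<integral>\<^sup>+x. indicator (cell \<delta> k) x * ennreal (norm (W' x *v \<phi> k) powr p) \<partial>lborel) \<le> ennreal (norm (\<phi> k) powr p) * IBL"
          unfolding IBL_def using p by (intro cell_vec_bound[OF Wm \<delta>]) (auto simp: KS_def)
      qed
      also have "\<dots> < \<infinity>" using IBL finKS by (simp add: ennreal_mult_less_top)
      finally show ?thesis .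
    qed
  next
    fix f assume f: "f \<in> F"
    obtain g where g: "g \<in> borel_measurable lborel" "AE x in lborel. f x = g x"
      using borel_version[OF Fm[OF f]] by blast
    note [measurable] = g(1)
    have gB: "Mf W' p g \<le> ennreal B" using a[OF f] Mf_AE[OF g(2), of W' p] by simp
    have gfin: "Mf W' p g < \<infinity>" by (rule le_less_trans[OF gB]) simp
    have gE: "\<forall>y\<in>Ybox \<delta>. Mf W' p (\<lambda>x. g (x - y) - g x) \<le> ennreal Ebd"
    proof
      fix y :: "real^'n" assume y: "y \<in> Ybox \<delta>"
      have "AE x in lborel. f (x - y) - f x = g (x - y) - g x"
        using AE_translate[OF g(2), of y] g(2) by eventually_elim simp
      then have "Mf W' p (\<lambda>x. f (x - y) - f x) = Mf W' p (\<lambda>x. g (x - y) - g x)" by (rule Mf_AE)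
      moreover have "Mf W' p (\<lambda>x. f (x - y) - f x) \<le> ennreal Ebd" using r(2) f Ysub y by blast
      ultimately show "Mf W' p (\<lambda>x. g (x - y) - g x) \<le> ennreal Ebd" by simp
    qed
    have gR: "Mf W' p (\<lambda>x. indicator (- ball 0 R) x *\<^sub>R g x) \<le> ennreal s"
    proof -
      have "AE x in lborel. indicator (- ball 0 R) x *\<^sub>R f x = indicator (- ball 0 R) x *\<^sub>R g x"
        using g(2) by eventually_elim simp
      then have "Mf W' p (\<lambda>x. indicator (- ball 0 R) x *\<^sub>R f x) = Mf W' p (\<lambda>x. indicator (- ball 0 R) x *\<^sub>R g x)" by (rule Mf_AE)
      moreover have "Mf W' p (\<lambda>x. indicator (- ball 0 R) x *\<^sub>R f x) \<le> ennreal s" using R(2) f by blast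
      ultimately show ?thesis by metis
    qed
    have gint: "\<And>k. set_integrable lborel (cell \<delta> k) g" by (rule loc_int[OF Wm inv p \<delta> g(1) gfin gE])
    have T1: "(\<Sum>k\<in>KS. \<integral>\<^sup>+x. indicator (cell \<delta> k) x * ennreal (norm (W' x *v (g x - coef \<delta> g k)) powr p) \<partial>lborel) \<le> ennreal s"
      using main_err[OF Wm p \<delta> g(1) gint gE less_imp_le[OF Ebd] finKS] Ebds by simp
    have cb: "norm (coef \<delta> g k) \<le> Rc" if "k \<in> KS" for k
      unfolding Rc_def by (rule coef_bound[OF Wm p finKS that g(1) gB B _ T1 \<alpha>0 h\<alpha>0[OF that]]) (use s in simp)
    define \<phi> where "\<phi> = restrict (\<lambda>k. rnd \<eta> (coef \<delta> g k)) KS"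
    have \<phi>K: "\<phi> \<in> PiE KS (\<lambda>_. Lat \<eta> M)"
      unfolding \<phi>_def M_def using rnd_Lat[OF \<eta> cb] by (simp add: restrict_PiE_iff)
    have Geq: "netf \<phi> = (\<lambda>x. \<Sum>k\<in>KS. indicator (cell \<delta> k) x *\<^sub>R rnd \<eta> (coef \<delta> g k))"
      unfolding netf_def \<phi>_def by (intro ext sum.cong) auto
    show "\<exists>G\<in>K. Mf W' p (\<lambda>x. f x - G x) \<le> ennreal t"
    proof (rule bexI[of _ "netf \<phi>"])
      show "netf \<phi> \<in> K" using \<phi>K unfolding K_def by blast
      have AEeq: "AE x in lborel. f x - netf \<phi> x = g x - netf \<phi> x" using g(2) by eventually_elim simp
      have "Mf W' p (\<lambda>x. f x - netf \<phi> x) = Mf W' p (\<lambda>x. g x - (\<Sum>k\<in>KS. indicator (cell \<delta> k) x *\<^sub>R rnd \<eta> (coef \<delta> g k)))"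
        using Mf_AE[OF AEeq] Geq by simp
      also have "\<dots> \<le> ennreal (3 powr p) * (ennreal s + of_nat (card KS) * (ennreal ((2 * real CARD('d) * \<eta>) powr p) * IBL) + ennreal s)"
        unfolding IBL_def N_def by (rule approx_err[OF Wm p \<delta> KS_def[unfolded N_def] g(1) T1 gR \<eta>])
      also have "\<dots> \<le> ennreal (3 powr p) * (ennreal s + ennreal s + ennreal s)"
      proof -
        have "of_nat (card KS) * (ennreal ((2 * real CARD('d) * \<eta>) powr p) * IBL) = ennreal (real (card KS) * (\<eta>e powr p * IBr))"
          unfolding \<eta>2 IBr(1) using IBr(2) by (simp add: ennreal_mult ennreal_of_nat_eq_real_of_nat)
        also have "real (card KS) * (\<eta>e powr p * IBr) \<le> s"
        proof -
          have "real (card KS) * (\<eta>e powr p * IBr) = s * (IBr / (IBr + 1))"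
          proof -
            have c0: "real (card KS) \<noteq> 0" using cardKS by simp
            have "real (card KS) * (s / (real (card KS) * (IBr + 1)) * IBr) = (real (card KS) * (s * IBr)) / (real (card KS) * (IBr + 1))"
              by simp
            also have "\<dots> = (s * IBr) / (IBr + 1)" by (rule nonzero_mult_divide_mult_cancel_left[OF c0])
            finally show ?thesis unfolding \<eta>ep by simp
          qed
          also have "\<dots> \<le> s * 1" using s IBr(2) by (intro mult_left_mono) auto
          finally show ?thesis by simp
        qed
        then have "ennreal (real (card KS) * (\<eta>e powr p * IBr)) \<le> ennreal s" by (rule ennreal_leI)
        finally show ?thesis by (intro mult_left_mono add_mono) auto
      qed
      also have "\<dots> = ennreal t"
      proof -
        have "3 powr p * (s + s + s) = t" using t by (simp add: s_def field_simps)
        then show ?thesis using s by (simp add: ennreal_mult[symmetric] ennreal_plus[symmetric] del: ennreal_plus)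
      qed
      finally show "Mf W' p (\<lambda>x. f x - netf \<phi> x) \<le> ennreal t" .
    qed
  qed
qed


definition Nrho :: "real \<Rightarrow> (real^'n \<Rightarrow> complex^'d \<Rightarrow> real) \<Rightarrow> (real^'n \<Rightarrow> complex^'d) \<Rightarrow> ennreal" where
  "Nrho p \<rho> h = (\<integral>\<^sup>+ x. ennreal (\<rho> x (h x) powr p) \<partial>lebesgue)"

lemma Nrho_le_Mf:
  fixes W W' :: "real^'n \<Rightarrow> complex^'d^'d"
  assumes le: "\<forall>x v. \<rho> x v \<le> norm (W x *v v)" and nn: "\<forall>x v. 0 \<le> \<rho> x v"
    and WW: "AE x in lborel. W x = W' x" and p: "p > 0"
  shows "Nrho p \<rho> h \<le> Mf W' p h"
proof -
  have "Nrho p \<rho> h \<le> (\<integral>\<^sup>+ x. ennreal (norm (W x *v h x) powr p) \<partial>lebesgue)"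
    unfolding Nrho_def using le nn p by (intro nn_integral_mono ennreal_leI powr_mono2) auto
  also have "\<dots> = (\<integral>\<^sup>+ x. ennreal (norm (W x *v h x) powr p) \<partial>lborel)" by (rule nn_integral_completion)
  also have "\<dots> = Mf W' p h" unfolding Mf_def using WW by (intro nn_integral_cong_AE) auto
  finally show ?thesis .
qed

lemma Mf_le_Nrho:
  fixes W W' :: "real^'n \<Rightarrow> complex^'d^'d"
  assumes le: "\<forall>x v. norm (W x *v v) \<le> c * \<rho> x v" and nn: "\<forall>x v. 0 \<le> \<rho> x v" and c: "c \<ge> 0"
    and WW: "AE x in lborel. W x = W' x" and p: "p > 0"
    and rho_meas: "\<forall>f::real^'n \<Rightarrow> complex^'d. f \<in> borel_measurable lebesgue \<longrightarrow> (\<lambda>x. \<rho> x (f x)) \<in> borel_measurable lebesgue"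
    and g: "g \<in> borel_measurable lborel" and hg: "AE x in lborel. h x = g x"
  shows "Mf W' p h \<le> ennreal (c powr p) * Nrho p \<rho> h"
proof -
  have gl: "g \<in> borel_measurable lebesgue" using g by (rule measurable_completion)
  have rm[measurable]: "(\<lambda>x. \<rho> x (g x)) \<in> borel_measurable lebesgue" using rho_meas gl by blast
  have "Mf W' p h = Mf W' p g" by (rule Mf_AE[OF hg])
  also have "\<dots> = (\<integral>\<^sup>+ x. ennreal (norm (W x *v g x) powr p) \<partial>lborel)" unfolding Mf_def using WW by (intro nn_integral_cong_AE) auto
  also have "\<dots> = (\<integral>\<^sup>+ x. ennreal (norm (W x *v g x) powr p) \<partial>lebesgue)" by (rule nn_integral_completion[symmetric])
  also have "\<dots> \<le> (\<integral>\<^sup>+ x. ennreal (c powr p) * ennreal (\<rho> x (g x) powr p) \<partial>lebesgue)"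
  proof (intro nn_integral_mono)
    fix x
    have "norm (W x *v g x) powr p \<le> (c * \<rho> x (g x)) powr p" using le p by (intro powr_mono2) auto
    also have "\<dots> = c powr p * \<rho> x (g x) powr p" using c nn by (simp add: powr_mult)
    finally show "ennreal (norm (W x *v g x) powr p) \<le> ennreal (c powr p) * ennreal (\<rho> x (g x) powr p)"
      by (simp add: ennreal_mult[symmetric] ennreal_leI)
  qed
  also have "\<dots> = ennreal (c powr p) * (\<integral>\<^sup>+ x. ennreal (\<rho> x (g x) powr p) \<partial>lebesgue)"
    by (rule nn_integral_cmult) measurable
  also have "(\<integral>\<^sup>+ x. ennreal (\<rho> x (g x) powr p) \<partial>lebesgue) = Nrho p \<rho> h"
    unfolding Nrho_def using AE_completion[OF hg] by (intro nn_integral_cong_AE) auto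
  finally show ?thesis .
qed

lemma Lp_norm_le_imp:
  assumes "Lp_rho_norm p \<rho> h \<le> ennreal e" "e \<ge> 0" "p > 0"
  shows "Nrho p \<rho> h \<le> ennreal (e powr p)"
proof -
  define I where "I = Nrho p \<rho> h"
  have nI: "Lp_rho_norm p \<rho> h = (if I = \<infinity> then \<infinity> else ennreal (enn2real I powr (1 / p)))"
    unfolding Lp_rho_norm_def I_def Nrho_def Let_def ..
  show ?thesis
  proof (cases "I = \<infinity>")
    case True then show ?thesis using assms(1) nI by (simp add: top_unique)
  next
    case False
    then have "ennreal (enn2real I powr (1 / p)) \<le> ennreal e" using assms(1) nI by simp
    then have le: "enn2real I powr (1 / p) \<le> e" using assms(2) by (simp add: ennreal_le_iff)
    have "enn2real I = (enn2real I powr (1 / p)) powr p" using assms(3) by (simp add: powr_powr)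
    also have "\<dots> \<le> e powr p" using le assms(3) by (intro powr_mono2) auto
    finally have "enn2real I \<le> e powr p" .
    then have "ennreal (enn2real I) \<le> ennreal (e powr p)" by (rule ennreal_leI)
    moreover have "ennreal (enn2real I) = I" using False by (simp add: less_top)
    ultimately show ?thesis unfolding I_def by metis
  qed
qed

lemma Lp_norm_less_if:
  assumes "Nrho p \<rho> h < ennreal (e powr p)" "e > 0" "p > 0"
  shows "Lp_rho_norm p \<rho> h < ennreal e"
proof -
  define I where "I = Nrho p \<rho> h"
  have nI: "Lp_rho_norm p \<rho> h = (if I = \<infinity> then \<infinity> else ennreal (enn2real I powr (1 / p)))"
    unfolding Lp_rho_norm_def I_def Nrho_def Let_def ..
  have fin: "I \<noteq> \<infinity>" using assms(1) I_def by auto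
  then have "ennreal (enn2real I) < ennreal (e powr p)" using assms(1) I_def by (simp add: less_top)
  then have lt: "enn2real I < e powr p" by (simp add: ennreal_less_iff)
  have "enn2real I powr (1 / p) < (e powr p) powr (1 / p)"
    using lt assms by (intro powr_less_mono2) auto
  also have "\<dots> = e" using assms by (simp add: powr_powr)
  finally have "ennreal (enn2real I powr (1 / p)) < ennreal e" using assms(2) by (intro ennreal_lessI) auto
  then show ?thesis using nI fin by simp
qed


theorem corollary3p3:
  fixes p :: real
    and \<rho> :: "real^'n \<Rightarrow> complex^'d \<Rightarrow> real"
    and W :: "real^'n \<Rightarrow> complex^'d^'d"
    and F :: "(real^'n \<Rightarrow> complex^'d) set"
  assumes p: "1 \<le> p"
    and norms: "\<forall>x. is_cnorm (\<rho> x)"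
    and rho_meas: "\<forall>f::real^'n \<Rightarrow> complex^'d. f \<in> borel_measurable lebesgue \<longrightarrow>
                     (\<lambda>x. \<rho> x (f x)) \<in> borel_measurable lebesgue"
    and W_pd: "\<forall>x. pos_def_sa (W x)"
    and W_equiv: "\<forall>x v. \<rho> x v \<le> norm (W x *v v) \<and> norm (W x *v v) \<le> sqrt (real CARD('d)) * \<rho> x v"
    and W_weight: "invertible_matrix_weight W"
    and W_p: "loc_integrable (\<lambda>x. op_norm (W x) powr p)"
    and F_sub: "F \<subseteq> Lp_rho p \<rho>"
    and a: "\<exists>C. \<forall>f\<in>F. Lp_rho_norm p \<rho> f \<le> C \<and> C < \<infinity>"
    and b: "\<forall>e>0. \<exists>R0. \<forall>R\<ge>R0. \<forall>f\<in>F.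
              Lp_rho_norm p \<rho> (\<lambda>x. indicator (- ball 0 R) x *\<^sub>R f x) \<le> ennreal e"
    and c: "\<forall>e>0. \<exists>r>0. \<forall>f\<in>F. \<forall>y\<in>ball 0 r.
              Lp_rho_norm p \<rho> (\<lambda>x. transl y f x - f x) \<le> ennreal e"
  shows "totally_bounded_Lp_rho p \<rho> F"
proof -
  have p0: "p > 0" using p by simp
  define cs where "cs = sqrt (real CARD('d))"
  have cs: "cs > 0" by (simp add: cs_def)
  have le1: "\<forall>x v. \<rho> x v \<le> norm (W x *v v)" using W_equiv by blast
  have le2: "\<forall>x v. norm (W x *v v) \<le> cs * \<rho> x v" using W_equiv by (simp add: cs_def)
  have nn: "\<forall>x v. 0 \<le> \<rho> x v"
  proof (intro allI)
    fix x v
    have "0 \<le> cs * \<rho> x v" using le2 norm_ge_zero order_trans by metis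
    then show "0 \<le> \<rho> x v" using cs by (simp add: zero_le_mult_iff)
  qed
  have MW: "matrix_weight W" using W_weight by (simp add: invertible_matrix_weight_def)
  have Went: "\<And>i j. (\<lambda>x. W x $ i $ j) \<in> borel_measurable lebesgue" using MW by (simp add: matrix_weight_def)
  have Wleb: "W \<in> borel_measurable lebesgue" by (intro meas_vecI Went)
  obtain W' where W': "W' \<in> borel_measurable lborel" "AE x in lborel. W x = W' x"
    using borel_version[OF Wleb] by blast
  have inv: "AE x in lborel. \<forall>v. v \<noteq> 0 \<longrightarrow> W' x *v v \<noteq> 0"
    using W'(2)
  proof eventually_elim
    case (elim x)
    show ?case
    proof (intro allI impI)
      fix v :: "complex^'d" assume v: "v \<noteq> 0"
      have "0 < Re (cinner v (W x *v v))" using W_pd v by (simp add: pos_def_sa_def)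
      then have "W x *v v \<noteq> 0" by (auto simp: cinner_def)
      then show "W' x *v v \<noteq> 0" using elim by simp
    qed
  qed
  have IB: "(\<integral>\<^sup>+x. indicator (cbox (- (L *\<^sub>R 1)) (L *\<^sub>R 1)) x * ennreal (Bmat (W' x) powr p) \<partial>lborel) < \<infinity>" for L :: real
  proof -
    define Kc :: "(real^'n) set" where "Kc = cbox (- (L *\<^sub>R 1)) (L *\<^sub>R 1)"
    have "set_integrable lebesgue Kc (\<lambda>x. op_norm (W x) powr p)"
      using W_p compact_cbox unfolding loc_integrable_def Kc_def by blast
    then have int: "integrable lebesgue (\<lambda>x. indicator Kc x *\<^sub>R (op_norm (W x) powr p))"
      by (simp add: set_integrable_def)
    then have fin: "(\<integral>\<^sup>+x. ennreal (norm (indicator Kc x *\<^sub>R (op_norm (W x) powr p))) \<partial>lebesgue) < \<infinity>"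
      by (simp add: integrable_iff_bounded)
    have m0: "(\<lambda>x. indicator Kc x *\<^sub>R (op_norm (W x) powr p)) \<in> borel_measurable lebesgue"
      by (rule borel_measurable_integrable[OF int])
    have mm: "(\<lambda>x. ennreal (norm (indicator Kc x *\<^sub>R (op_norm (W x) powr p)))) \<in> borel_measurable lebesgue"
      using m0 by measurable
    define cc where "cc = (real (CARD('d) * CARD('d))) powr p"
    have "(\<integral>\<^sup>+x. indicator Kc x * ennreal (Bmat (W' x) powr p) \<partial>lborel) = (\<integral>\<^sup>+x. indicator Kc x * ennreal (Bmat (W' x) powr p) \<partial>lebesgue)"
      by (rule nn_integral_completion[symmetric])
    also have "\<dots> \<le> (\<integral>\<^sup>+x. ennreal cc * ennreal (norm (indicator Kc x *\<^sub>R (op_norm (W x) powr p))) \<partial>lebesgue)"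
    proof (rule nn_integral_mono_AE)
      show "AE x in lebesgue. indicator Kc x * ennreal (Bmat (W' x) powr p) \<le> ennreal cc * ennreal (norm (indicator Kc x *\<^sub>R (op_norm (W x) powr p)))"
        using AE_completion[OF W'(2)]
      proof eventually_elim
        case (elim x)
        have "Bmat (W' x) powr p \<le> (real (CARD('d) * CARD('d)) * op_norm (W x)) powr p"
          using elim Bmat_le_op_norm[of "W x"] Bmat_nonneg[of "W' x"] p0 by (intro powr_mono2) auto
        also have "\<dots> = cc * op_norm (W x) powr p"
          unfolding cc_def using onorm_pos_le[of "\<lambda>v. W x *v v"] by (simp add: powr_mult op_norm_def)
        finally have le: "Bmat (W' x) powr p \<le> cc * op_norm (W x) powr p" .
        have cc0: "cc \<ge> 0" by (simp add: cc_def)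
        show ?case
        proof (cases "x \<in> Kc")
          case True
          have "ennreal (Bmat (W' x) powr p) \<le> ennreal (cc * op_norm (W x) powr p)" using le by (rule ennreal_leI)
          then show ?thesis using True cc0 by (simp add: ennreal_mult)
        qed simp
      qed
    qed
    also have "\<dots> = ennreal cc * (\<integral>\<^sup>+x. ennreal (norm (indicator Kc x *\<^sub>R (op_norm (W x) powr p))) \<partial>lebesgue)"
      by (rule nn_integral_cmult[OF mm])
    also have "\<dots> < \<infinity>" using fin by (simp add: ennreal_mult_less_top)
    finally show ?thesis unfolding Kc_def .
  qed
  have Fm: "\<And>f. f \<in> F \<Longrightarrow> f \<in> borel_measurable lebesgue" using F_sub by (auto simp: Lp_rho_def)
  have bv: "\<exists>g\<in>borel_measurable lborel. AE x in lborel. f x = g x" if "f \<in> F" for f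
    using borel_version[OF Fm[OF that]] .
  define cp where "cp = cs powr p"
  have cp: "cp > 0" using cs by (simp add: cp_def)
  have MfN: "Mf W' p h \<le> ennreal cp * Nrho p \<rho> h" if "g \<in> borel_measurable lborel" "AE x in lborel. h x = g x" for g h
    unfolding cp_def by (rule Mf_le_Nrho[OF le2 nn _ W'(2) p0 rho_meas that]) (use cs in simp)
  obtain C where C: "\<forall>f\<in>F. Lp_rho_norm p \<rho> f \<le> C \<and> C < \<infinity>" using a by blast
  define C' where "C' = enn2real C"
  have C'0: "C' \<ge> 0" by (simp add: C'_def)
  define B where "B = cp * C' powr p"
  have B0: "B \<ge> 0" using cp by (simp add: B_def)
  have aa: "Mf W' p f \<le> ennreal B" if f: "f \<in> F" for f
  proof -
    obtain g where g: "g \<in> borel_measurable lborel" "AE x in lborel. f x = g x" using bv[OF f] by blast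
    have "Mf W' p f \<le> ennreal cp * Nrho p \<rho> f" by (rule MfN[OF g])
    also have "\<dots> \<le> ennreal cp * ennreal (C' powr p)"
    proof (intro mult_left_mono Lp_norm_le_imp)
      have "C < \<infinity>" using C f by blast
      then have "C = ennreal C'" by (simp add: C'_def less_top)
      then show "Lp_rho_norm p \<rho> f \<le> ennreal C'" using C f by auto
    qed (use C'0 p0 in auto)
    also have "\<dots> = ennreal B" using cp by (simp add: B_def ennreal_mult)
    finally show ?thesis .
  qed
  have bb: "\<exists>R>0. \<forall>f\<in>F. Mf W' p (\<lambda>x. indicator (- ball 0 R) x *\<^sub>R f x) \<le> ennreal t" if t: "t > 0" for t
  proof -
    define e where "e = (t / cp) powr (1 / p)"
    have e: "e > 0" using t cp by (simp add: e_def)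
    have ep: "e powr p = t / cp" using t cp p0 by (simp add: e_def powr_powr)
    obtain R0 where R0: "\<forall>R\<ge>R0. \<forall>f\<in>F. Lp_rho_norm p \<rho> (\<lambda>x. indicator (- ball 0 R) x *\<^sub>R f x) \<le> ennreal e"
      using b e by blast
    define R where "R = max R0 1"
    show ?thesis
    proof (intro exI[of _ R] conjI ballI)
      show "R > 0" by (simp add: R_def)
      fix f assume f: "f \<in> F"
      obtain g where g: "g \<in> borel_measurable lborel" "AE x in lborel. f x = g x" using bv[OF f] by blast
      have AE: "AE x in lborel. indicator (- ball 0 R) x *\<^sub>R f x = indicator (- ball 0 R) x *\<^sub>R g x"
        using g(2) by eventually_elim simp
      have gm: "(\<lambda>x. indicator (- ball 0 R) x *\<^sub>R g x) \<in> borel_measurable lborel" using g(1) by measurable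
      have "Mf W' p (\<lambda>x. indicator (- ball 0 R) x *\<^sub>R f x) \<le> ennreal cp * Nrho p \<rho> (\<lambda>x. indicator (- ball 0 R) x *\<^sub>R f x)"
        by (rule MfN[OF gm AE])
      also have "\<dots> \<le> ennreal cp * ennreal (e powr p)"
        by (intro mult_left_mono Lp_norm_le_imp) (use R0 f e p0 in \<open>auto simp: R_def\<close>)
      also have "\<dots> = ennreal t" using cp t by (simp add: ep ennreal_mult[symmetric])
      finally show "Mf W' p (\<lambda>x. indicator (- ball 0 R) x *\<^sub>R f x) \<le> ennreal t" .
    qed
  qed
  have ccc: "\<exists>r>0. \<forall>f\<in>F. \<forall>y\<in>ball 0 r. Mf W' p (\<lambda>x. f (x - y) - f x) \<le> ennreal t" if t: "t > 0" for t
  proof -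
    define e where "e = (t / cp) powr (1 / p)"
    have e: "e > 0" using t cp by (simp add: e_def)
    have ep: "e powr p = t / cp" using t cp p0 by (simp add: e_def powr_powr)
    obtain r where r: "r > 0" "\<forall>f\<in>F. \<forall>y\<in>ball 0 r. Lp_rho_norm p \<rho> (\<lambda>x. transl y f x - f x) \<le> ennreal e"
      using c e by blast
    show ?thesis
    proof (intro exI[of _ r] conjI ballI)
      show "r > 0" by fact
      fix f y assume f: "f \<in> F" and y: "y \<in> ball (0::real^'n) r"
      obtain g where g: "g \<in> borel_measurable lborel" "AE x in lborel. f x = g x" using bv[OF f] by blast
      have AE: "AE x in lborel. f (x - y) - f x = g (x - y) - g x"
        using AE_translate[OF g(2), of y] g(2) by eventually_elim simp
      have gm: "(\<lambda>x. g (x - y) - g x) \<in> borel_measurable lborel" using g(1) by measurable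
      have "Mf W' p (\<lambda>x. f (x - y) - f x) \<le> ennreal cp * Nrho p \<rho> (\<lambda>x. f (x - y) - f x)"
        by (rule MfN[OF gm AE])
      also have "\<dots> \<le> ennreal cp * ennreal (e powr p)"
      proof (intro mult_left_mono Lp_norm_le_imp)
        show "Lp_rho_norm p \<rho> (\<lambda>x. f (x - y) - f x) \<le> ennreal e"
          using r(2) f y by (simp add: transl_def)
      qed (use e p0 in auto)
      also have "\<dots> = ennreal t" using cp t by (simp add: ep ennreal_mult[symmetric])
      finally show "Mf W' p (\<lambda>x. f (x - y) - f x) \<le> ennreal t" .
    qed
  qed
  show ?thesis unfolding totally_bounded_Lp_rho_def
  proof (intro allI impI)
    fix e :: real assume e: "e > 0"
    define t0 where "t0 = e powr p / 2"
    have t0: "t0 > 0" using e by (simp add: t0_def)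
    have t0e: "t0 < e powr p" using e by (simp add: t0_def)
    obtain K where K: "finite K" "\<forall>G\<in>K. G \<in> borel_measurable lborel \<and> Mf W' p G < \<infinity>"
      "\<forall>f\<in>F. \<exists>G\<in>K. Mf W' p (\<lambda>x. f x - G x) \<le> ennreal t0"
      using net_exists[OF W'(1) inv p IB Fm aa B0 bb ccc t0] by blast
    show "\<exists>K. finite K \<and> K \<subseteq> Lp_rho p \<rho> \<and> (\<forall>f\<in>F. \<exists>g\<in>K. Lp_rho_norm p \<rho> (\<lambda>x. f x - g x) < ennreal e)"
    proof (intro exI[of _ K] conjI ballI subsetI)
      show "finite K" by (rule K(1))
    next
      fix G assume G: "G \<in> K"
      have "G \<in> borel_measurable lebesgue" using K(2) G by (auto intro: measurable_completion)
      moreover have "Nrho p \<rho> G < \<infinity>"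
        using Nrho_le_Mf[OF le1 nn W'(2) p0, of G] K(2) G by (auto intro: le_less_trans)
      ultimately show "G \<in> Lp_rho p \<rho>" by (simp add: Lp_rho_def Nrho_def)
    next
      fix f assume f: "f \<in> F"
      obtain G where G: "G \<in> K" "Mf W' p (\<lambda>x. f x - G x) \<le> ennreal t0" using K(3) f by blast
      have "Nrho p \<rho> (\<lambda>x. f x - G x) \<le> ennreal t0"
        using Nrho_le_Mf[OF le1 nn W'(2) p0, of "\<lambda>x. f x - G x"] G(2) by simp
      also have "\<dots> < ennreal (e powr p)" using t0 t0e by (intro ennreal_lessI) auto
      finally have "Lp_rho_norm p \<rho> (\<lambda>x. f x - G x) < ennreal e" by (rule Lp_norm_less_if) (use e p0 in auto)
      then show "\<exists>g\<in>K. Lp_rho_norm p \<rho> (\<lambda>x. f x - g x) < ennreal e" using G(1) by blast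
    qed
  qed
qed

end
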